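(* Let $\mathscr T=(V,\mathcal E)$ be the directed Cartesian product of locally finite rooted directed trees $\mathscr T_1,\dots,\mathscr T_d$, let $a>0$, and let $S_{\boldsymbol\lambda_{\mathfrak C_a}}=(S_1,\dots,S_d)$ be the multishift on $\mathscr T$ with weights $$\lambda^{(j)}_w=\frac{1}{\sqrt{\mathrm{card}(\mathsf{Chi}_j(v))}}\sqrt{\frac{\alpha_{v_j}+1}{|\alpha_v|+a}}\qquad(w\in\mathsf{Chi}_j(v),\ v\in V,\ j=1,\dots,d).$$ If $\mathscr T$ has finite joint branching index, then $S_{\boldsymbol\lambda_{\mathfrak C_a}}$ is essentially normal, i.e. $S_i^*S_j-S_jS_i^*$ is compact for all $i,j=1,\dots,d$.
   Context: Directed trees: no loops or circuits, connected ignoring orientation, unique parent $\mathsf{par}(v)$ for vertices with incoming edges; rooted: unique parentless vertex $\mathsf{root}$; $\mathsf{Chi}(u)=\{v:(u,v)\in\mathcal E\}$; locally finite: all $\mathsf{Chi}(u)$ finite; all leafless. Depth of $u$: $n$ with $u\in\mathsf{Chi}^n(\mathsf{root})$. Branching index of $\mathscr T_j$: $1+\sup\{\text{depth}(w):\mathrm{card}\,\mathsf{Chi}(w)\ge2\}$, or $0$ if no such $w$; finite joint branching index means every $\mathscr T_j$ has finite branching index. Directed Cartesian product: $V=V_1\times\dots\times V_d$ (countably infinite), $(v,w)\in\mathcal E$ iff for some $k$, $(v_k,w_k)\in\mathcal E_k$ and $w_j=v_j$ ($j\ne k$). $\mathsf{Chi}_j(v)=\{w:w_j\in\mathsf{Chi}(v_j),w_k=v_k\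 (k\ne j)\}$. Depth $\alpha_v=(\alpha_{v_1},\dots,\alpha_{v_d})$, $\alpha_{v_j}$ the depth of $v_j$ in $\mathscr T_j$, $|\alpha_v|=\sum_j\alpha_{v_j}$. The multishift acts by $S_je_v=\sum_{w\in\mathsf{Chi}_j(v)}\lambda^{(j)}_we_w$ on $l^2(V)$. *)

theory Defs
  imports "HOL-Analysis.Analysis" "HOL-Library.Extended_Nat"
begin

definition tree_edges :: "'a set \<Rightarrow> ('a \<Rightarrow> 'a set) \<Rightarrow> ('a \<times> 'a) set" where
  "tree_edges V chi = {(u, v). u \<in> V \<and> v \<in> chi u}"

definition rooted_directed_tree :: "'a set \<Rightarrow> ('a \<Rightarrow> 'a set) \<Rightarrow> bool" where
  "rooted_directed_tree V chi \<longleftrightarrow>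
     (\<forall>u\<in>V. chi u \<subseteq> V) \<and>
     (\<forall>u\<in>V. (u, u) \<notin> (tree_edges V chi)\<^sup>+) \<and>
     (\<forall>u\<in>V. \<forall>v\<in>V. (u, v) \<in> (tree_edges V chi \<union> (tree_edges V chi)\<inverse>)\<^sup>*) \<and>
     (\<forall>u1 u2 v. (u1, v) \<in> tree_edges V chi \<longrightarrow> (u2, v) \<in> tree_edges V chi \<longrightarrow> u1 = u2) \<and>
     (\<exists>!r. r \<in> V \<and> \<not> (\<exists>u. (u, r) \<in> tree_edges V chi))"

definition locally_finite_tree :: "'a set \<Rightarrow> ('a \<Rightarrow> 'a set) \<Rightarrow> bool" where
  "locally_finite_tree V chi \<longleftrightarrow> (\<forall>u\<in>V. finite (chi u))"

definition leafless_tree :: "'a set \<Rightarrow> ('a \<Rightarrow> 'a set) \<Rightarrow> bool" where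
  "leafless_tree V chi \<longleftrightarrow> (\<forall>u\<in>V. chi u \<noteq> {})"

definition tree_root :: "'a set \<Rightarrow> ('a \<Rightarrow> 'a set) \<Rightarrow> 'a" where
  "tree_root V chi = (THE r. r \<in> V \<and> \<not> (\<exists>u. (u, r) \<in> tree_edges V chi))"

primrec chi_pow :: "('a \<Rightarrow> 'a set) \<Rightarrow> nat \<Rightarrow> 'a set \<Rightarrow> 'a set" where
  "chi_pow chi 0 A = A"
| "chi_pow chi (Suc n) A = (\<Union>u\<in>chi_pow chi n A. chi u)"

definition tree_depth :: "'a set \<Rightarrow> ('a \<Rightarrow> 'a set) \<Rightarrow> 'a \<Rightarrow> nat" where
  "tree_depth V chi u = (LEAST n. u \<in> chi_pow chi n {tree_root V chi})"

definition branching_index :: "'a set \<Rightarrow> ('a \<Rightarrow> 'a set) \<Rightarrow> enat" where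
  "branching_index V chi =
     (let W = {w \<in> V. card (chi w) \<ge> 2}
      in if W = {} then 0 else 1 + (SUP w\<in>W. enat (tree_depth V chi w)))"

definition prod_V :: "nat \<Rightarrow> (nat \<Rightarrow> 'a set) \<Rightarrow> (nat \<Rightarrow> 'a) set" where
  "prod_V d Vt = PiE {..<d} Vt"

definition prod_Chi ::
  "nat \<Rightarrow> (nat \<Rightarrow> 'a set) \<Rightarrow> (nat \<Rightarrow> 'a \<Rightarrow> 'a set) \<Rightarrow> nat \<Rightarrow> (nat \<Rightarrow> 'a) \<Rightarrow> (nat \<Rightarrow> 'a) set" where
  "prod_Chi d Vt ch j v = {w \<in> prod_V d Vt. w j \<in> ch j (v j) \<and> (\<forall>k. k \<noteq> j \<longrightarrow> w k = v k)}"

definition alpha :: "(nat \<Rightarrow> 'a set) \<Rightarrow> (nat \<Rightarrow> 'a \<Rightarrow> 'a set) \<Rightarrow> (nat \<Rightarrow> 'a) \<Rightarrow> nat \<Rightarrow> nat" where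
  "alpha Vt ch v j = tree_depth (Vt j) (ch j) (v j)"

definition alpha_abs :: "nat \<Rightarrow> (nat \<Rightarrow> 'a set) \<Rightarrow> (nat \<Rightarrow> 'a \<Rightarrow> 'a set) \<Rightarrow> (nat \<Rightarrow> 'a) \<Rightarrow> nat" where
  "alpha_abs d Vt ch v = (\<Sum>j<d. alpha Vt ch v j)"

text \<open>The weight lambda^(j)_w for w in Chi_j(v) (it depends on the parent v).\<close>
definition weight_Ca ::
  "nat \<Rightarrow> (nat \<Rightarrow> 'a set) \<Rightarrow> (nat \<Rightarrow> 'a \<Rightarrow> 'a set) \<Rightarrow> real \<Rightarrow> nat \<Rightarrow> (nat \<Rightarrow> 'a) \<Rightarrow> complex" where
  "weight_Ca d Vt ch a j v =
     complex_of_real (1 / sqrt (real (card (prod_Chi d Vt ch j v)))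
       * sqrt ((real (alpha Vt ch v j) + 1) / (real (alpha_abs d Vt ch v) + a)))"

definition ell2 :: "'v set \<Rightarrow> ('v \<Rightarrow> complex) set" where
  "ell2 V = {f. (\<forall>x. x \<notin> V \<longrightarrow> f x = 0) \<and> (\<lambda>x. (cmod (f x))\<^sup>2) summable_on V}"

definition ell2_norm :: "'v set \<Rightarrow> ('v \<Rightarrow> complex) \<Rightarrow> real" where
  "ell2_norm V f = sqrt (\<Sum>\<^sub>\<infinity>x\<in>V. (cmod (f x))\<^sup>2)"

definition ell2_inner :: "'v set \<Rightarrow> ('v \<Rightarrow> complex) \<Rightarrow> ('v \<Rightarrow> complex) \<Rightarrow> complex" where
  "ell2_inner V f g = (\<Sum>\<^sub>\<infinity>x\<in>V. cnj (f x) * g x)"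

definition linear_op :: "'v set \<Rightarrow> (('v \<Rightarrow> complex) \<Rightarrow> ('v \<Rightarrow> complex)) \<Rightarrow> bool" where
  "linear_op V T \<longleftrightarrow> (\<forall>f\<in>ell2 V. T f \<in> ell2 V) \<and>
     (\<forall>c. \<forall>f\<in>ell2 V. \<forall>g\<in>ell2 V. T (\<lambda>x. c * f x + g x) = (\<lambda>x. c * T f x + T g x))"

definition bounded_op :: "'v set \<Rightarrow> (('v \<Rightarrow> complex) \<Rightarrow> ('v \<Rightarrow> complex)) \<Rightarrow> bool" where
  "bounded_op V T \<longleftrightarrow> linear_op V T \<and>
     (\<exists>C. \<forall>f\<in>ell2 V. ell2_norm V (T f) \<le> C * ell2_norm V f)"

definition is_adjoint :: "'v set \<Rightarrow> (('v \<Rightarrow> complex) \<Rightarrow> ('v \<Rightarrow> complex))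
     \<Rightarrow> (('v \<Rightarrow> complex) \<Rightarrow> ('v \<Rightarrow> complex)) \<Rightarrow> bool" where
  "is_adjoint V T T' \<longleftrightarrow> (\<forall>g\<in>ell2 V. T' g \<in> ell2 V) \<and>
     (\<forall>f\<in>ell2 V. \<forall>g\<in>ell2 V. ell2_inner V (T f) g = ell2_inner V f (T' g))"

definition compact_operator_ell2 :: "'v set \<Rightarrow> (('v \<Rightarrow> complex) \<Rightarrow> ('v \<Rightarrow> complex)) \<Rightarrow> bool" where
  "compact_operator_ell2 V T \<longleftrightarrow> linear_op V T \<and>
     (\<forall>(f :: nat \<Rightarrow> 'v \<Rightarrow> complex) (B::real). (\<forall>n. f n \<in> ell2 V \<and> ell2_norm V (f n) \<le> B) \<longrightarrow>
        (\<exists>(r :: nat \<Rightarrow> nat) g. strict_mono r \<and> g \<in> ell2 V \<and>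
           (\<lambda>n. ell2_norm V (\<lambda>x. T (f (r n)) x - g x)) \<longlonglongrightarrow> 0))"

text \<open>The multishift S_j: S_j e_v = sum_{w in Chi_j(v)} lambda_w e_w, extended linearly:
  (S_j f)(w) = sum over v with w in Chi_j(v) of lambda^(j)_w f(v).\<close>
definition multishift ::
  "nat \<Rightarrow> (nat \<Rightarrow> 'a set) \<Rightarrow> (nat \<Rightarrow> 'a \<Rightarrow> 'a set)
     \<Rightarrow> (nat \<Rightarrow> (nat \<Rightarrow> 'a) \<Rightarrow> complex) \<Rightarrow> nat
     \<Rightarrow> ((nat \<Rightarrow> 'a) \<Rightarrow> complex) \<Rightarrow> ((nat \<Rightarrow> 'a) \<Rightarrow> complex)" where
  "multishift d Vt ch lam j f = (\<lambda>w. if w \<in> prod_V d Vt then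
       (\<Sum>\<^sub>\<infinity>v\<in>{v \<in> prod_V d Vt. w \<in> prod_Chi d Vt ch j v}. lam j v * f v) else 0)"

end

theory Submission
  imports Defs "HOL-Library.Diagonal_Subsequence"
begin


lemma ell2_zero_out: "f \<in> ell2 V \<Longrightarrow> x \<notin> V \<Longrightarrow> f x = 0"
  by (simp add: ell2_def)

lemma ell2_summable: "f \<in> ell2 V \<Longrightarrow> (\<lambda>x. (cmod (f x))\<^sup>2) summable_on V"
  by (simp add: ell2_def)

lemma ell2_norm_nonneg: "ell2_norm V f \<ge> 0"
  by (simp add: ell2_norm_def infsum_nonneg)

lemma ell2_norm_sq: "f \<in> ell2 V \<Longrightarrow> (ell2_norm V f)\<^sup>2 = (\<Sum>\<^sub>\<infinity>x\<in>V. (cmod (f x))\<^sup>2)"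
  by (simp add: ell2_norm_def infsum_nonneg)

lemma ell2I:
  assumes out: "\<And>x. x \<notin> V \<Longrightarrow> f x = 0" and C: "C \<ge> 0"
    and fin: "\<And>F. finite F \<Longrightarrow> F \<subseteq> V \<Longrightarrow> (\<Sum>x\<in>F. (cmod (f x))\<^sup>2) \<le> C\<^sup>2"
  shows "f \<in> ell2 V \<and> ell2_norm V f \<le> C"
proof -
  have sm: "(\<lambda>x. (cmod (f x))\<^sup>2) summable_on V"
    by (rule nonneg_bdd_above_summable_on) (auto intro!: bdd_aboveI2 fin)
  have "(\<Sum>\<^sub>\<infinity>x\<in>V. (cmod (f x))\<^sup>2) \<le> C\<^sup>2"
    by (rule infsum_le_finite_sums[OF sm]) (use fin in auto)
  then have "ell2_norm V f \<le> sqrt (C\<^sup>2)" unfolding ell2_norm_def by (rule real_sqrt_le_mono)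
  with C sm out show ?thesis by (simp add: ell2_def)
qed

lemma ell2_fin:
  assumes "f \<in> ell2 V" "finite F" "F \<subseteq> V"
  shows "(\<Sum>x\<in>F. (cmod (f x))\<^sup>2) \<le> (ell2_norm V f)\<^sup>2"
  unfolding ell2_norm_sq[OF assms(1)]
  by (rule finite_sum_le_infsum) (use assms in \<open>auto simp: ell2_def\<close>)

lemma ell2_fin_L2:
  assumes "f \<in> ell2 V" "finite F" "F \<subseteq> V"
  shows "L2_set (\<lambda>x. cmod (f x)) F \<le> ell2_norm V f"
proof -
  have "L2_set (\<lambda>x. cmod (f x)) F \<le> sqrt ((ell2_norm V f)\<^sup>2)"
    unfolding L2_set_def by (rule real_sqrt_le_mono) (rule ell2_fin[OF assms])
  then show ?thesis by (simp add: ell2_norm_nonneg)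
qed

lemma ell2_point:
  assumes "f \<in> ell2 V" "x \<in> V"
  shows "cmod (f x) \<le> ell2_norm V f"
  using ell2_fin_L2[OF assms(1), of "{x}"] assms(2) by (simp add: L2_set_def)

lemma ell2I_L2:
  assumes out: "\<And>x. x \<notin> V \<Longrightarrow> f x = 0" and C: "C \<ge> 0"
    and fin: "\<And>F. finite F \<Longrightarrow> F \<subseteq> V \<Longrightarrow> L2_set (\<lambda>x. cmod (f x)) F \<le> C"
  shows "f \<in> ell2 V \<and> ell2_norm V f \<le> C"
proof (rule ell2I[OF out C])
  fix F assume F: "finite F" "F \<subseteq> V"
  have "(\<Sum>x\<in>F. (cmod (f x))\<^sup>2) = (L2_set (\<lambda>x. cmod (f x)) F)\<^sup>2"
    by (simp add: L2_set_def sum_nonneg)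
  also have "\<dots> \<le> C\<^sup>2" using fin[OF F] L2_set_nonneg[of "\<lambda>x. cmod (f x)" F] by (intro power_mono) auto
  finally show "(\<Sum>x\<in>F. (cmod (f x))\<^sup>2) \<le> C\<^sup>2" .
qed

lemma ell2_add:
  assumes "f \<in> ell2 V" "g \<in> ell2 V"
  shows "(\<lambda>x. f x + g x) \<in> ell2 V \<and> ell2_norm V (\<lambda>x. f x + g x) \<le> ell2_norm V f + ell2_norm V g"
proof (rule ell2I_L2)
  show "\<And>x. x \<notin> V \<Longrightarrow> f x + g x = 0" using assms by (simp add: ell2_def)
  show "0 \<le> ell2_norm V f + ell2_norm V g" by (simp add: ell2_norm_nonneg add_nonneg_nonneg)
  fix F assume F: "finite F" "F \<subseteq> V"
  have "L2_set (\<lambda>x. cmod (f x + g x)) F \<le> L2_set (\<lambda>x. cmod (f x) + cmod (g x)) F"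
    by (rule L2_set_mono) (auto simp: norm_triangle_ineq)
  also have "\<dots> \<le> L2_set (\<lambda>x. cmod (f x)) F + L2_set (\<lambda>x. cmod (g x)) F"
    by (rule L2_set_triangle_ineq)
  also have "\<dots> \<le> ell2_norm V f + ell2_norm V g"
    using ell2_fin_L2[OF assms(1) F] ell2_fin_L2[OF assms(2) F] by simp
  finally show "L2_set (\<lambda>x. cmod (f x + g x)) F \<le> ell2_norm V f + ell2_norm V g" .
qed

lemma ell2_scale:
  assumes "f \<in> ell2 V"
  shows "(\<lambda>x. c * f x) \<in> ell2 V \<and> ell2_norm V (\<lambda>x. c * f x) \<le> cmod c * ell2_norm V f"
proof (rule ell2I_L2)
  show "\<And>x. x \<notin> V \<Longrightarrow> c * f x = 0" using assms by (simp add: ell2_def)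
  show "0 \<le> cmod c * ell2_norm V f" by (simp add: ell2_norm_nonneg)
  fix F assume F: "finite F" "F \<subseteq> V"
  have "L2_set (\<lambda>x. cmod (c * f x)) F = cmod c * L2_set (\<lambda>x. cmod (f x)) F"
    by (simp add: norm_mult L2_set_right_distrib)
  also have "\<dots> \<le> cmod c * ell2_norm V f"
    using ell2_fin_L2[OF assms F] by (simp add: mult_left_mono)
  finally show "L2_set (\<lambda>x. cmod (c * f x)) F \<le> cmod c * ell2_norm V f" .
qed

lemma ell2_diff:
  assumes "f \<in> ell2 V" "g \<in> ell2 V"
  shows "(\<lambda>x. f x - g x) \<in> ell2 V \<and> ell2_norm V (\<lambda>x. f x - g x) \<le> ell2_norm V f + ell2_norm V g"
proof -
  have m: "(\<lambda>x. (-1) * g x) \<in> ell2 V \<and> ell2_norm V (\<lambda>x. (-1) * g x) \<le> ell2_norm V g"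
    using ell2_scale[OF assms(2), of "-1"] by simp
  have "(\<lambda>x. f x + (-1) * g x) \<in> ell2 V \<and> ell2_norm V (\<lambda>x. f x + (-1) * g x) \<le> ell2_norm V f + ell2_norm V (\<lambda>x. (-1) * g x)"
    using ell2_add[OF assms(1) conjunct1[OF m]] by simp
  then show ?thesis using m by simp
qed

lemma ell2_restrict:
  assumes "f \<in> ell2 V"
  shows "(\<lambda>x. if x \<in> A then f x else 0) \<in> ell2 V \<and> ell2_norm V (\<lambda>x. if x \<in> A then f x else 0) \<le> ell2_norm V f"
proof (rule ell2I_L2)
  show "\<And>x. x \<notin> V \<Longrightarrow> (if x \<in> A then f x else 0) = 0" using assms by (simp add: ell2_def)
  show "0 \<le> ell2_norm V f" by (simp add: ell2_norm_nonneg)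
  fix F assume F: "finite F" "F \<subseteq> V"
  have "L2_set (\<lambda>x. cmod (if x \<in> A then f x else 0)) F \<le> L2_set (\<lambda>x. cmod (f x)) F"
    by (rule L2_set_mono) auto
  also have "\<dots> \<le> ell2_norm V f" using ell2_fin_L2[OF assms F] .
  finally show "L2_set (\<lambda>x. cmod (if x \<in> A then f x else 0)) F \<le> ell2_norm V f" .
qed

lemma ell2_finsupp:
  assumes "finite A" "A \<subseteq> V" "\<And>x. x \<notin> A \<Longrightarrow> f x = 0"
  shows "f \<in> ell2 V \<and> ell2_norm V f \<le> (\<Sum>x\<in>A. cmod (f x))"
proof (rule ell2I_L2)
  show "\<And>x. x \<notin> V \<Longrightarrow> f x = 0" using assms by auto
  show "0 \<le> (\<Sum>x\<in>A. cmod (f x))" by (simp add: sum_nonneg)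
  fix F assume F: "finite F" "F \<subseteq> V"
  have "L2_set (\<lambda>x. cmod (f x)) F \<le> L2_set (\<lambda>x. cmod (f x)) (F \<inter> A)"
  proof -
    have "L2_set (\<lambda>x. cmod (f x)) F = L2_set (\<lambda>x. cmod (f x)) (F \<inter> A)"
      unfolding L2_set_def
      by (rule arg_cong[where f=sqrt], rule sum.mono_neutral_right) (use F assms in auto)
    then show ?thesis by simp
  qed
  also have "\<dots> \<le> (\<Sum>x\<in>F \<inter> A. cmod (f x))" by (rule L2_set_le_sum) simp
  also have "\<dots> \<le> (\<Sum>x\<in>A. cmod (f x))" by (rule sum_mono2) (use assms in auto)
  finally show "L2_set (\<lambda>x. cmod (f x)) F \<le> (\<Sum>x\<in>A. cmod (f x))" .
qed

lemma ell2_zero: "(\<lambda>x. 0) \<in> ell2 V"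
  using ell2_finsupp[of "{}" V "\<lambda>x. 0"] by simp

lemma ell2_norm_zero: "ell2_norm V (\<lambda>x. 0) = 0"
  by (simp add: ell2_norm_def)


section \<open>Linear operators\<close>

lemma lin_in: "linear_op V T \<Longrightarrow> f \<in> ell2 V \<Longrightarrow> T f \<in> ell2 V"
  by (simp add: linear_op_def)

lemma lin_comb: "linear_op V T \<Longrightarrow> f \<in> ell2 V \<Longrightarrow> g \<in> ell2 V \<Longrightarrow>
   T (\<lambda>x. c * f x + g x) = (\<lambda>x. c * T f x + T g x)"
  by (simp add: linear_op_def)

lemma lin_zero: assumes "linear_op V T" shows "T (\<lambda>x. 0) = (\<lambda>x. 0)"
  using lin_comb[OF assms ell2_zero ell2_zero, of "-1"] by simp

lemma lin_add: "linear_op V T \<Longrightarrow> f \<in> ell2 V \<Longrightarrow> g \<in> ell2 V \<Longrightarrow>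
   T (\<lambda>x. f x + g x) = (\<lambda>x. T f x + T g x)"
  using lin_comb[of V T f g 1] by simp

lemma lin_scale: assumes "linear_op V T" "f \<in> ell2 V"
  shows "T (\<lambda>x. c * f x) = (\<lambda>x. c * T f x)"
  using lin_comb[OF assms ell2_zero, of c] lin_zero[OF assms(1)] by simp

lemma lin_diff: assumes "linear_op V T" "f \<in> ell2 V" "g \<in> ell2 V"
  shows "T (\<lambda>x. f x - g x) = (\<lambda>x. T f x - T g x)"
proof -
  have "T (\<lambda>x. (-1) * g x + f x) = (\<lambda>x. (-1) * T g x + T f x)"
    by (rule lin_comb[OF assms(1,3,2)])
  moreover have "(\<lambda>x. (-1) * g x + f x) = (\<lambda>x. f x - g x)" by auto
  moreover have "(\<lambda>x. (-1) * T g x + T f x) = (\<lambda>x. T f x - T g x)" by auto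
  ultimately show ?thesis by simp
qed

definition ev :: "'v \<Rightarrow> 'v \<Rightarrow> complex" where "ev v = (\<lambda>x. if x = v then 1 else 0)"

lemma ev_ell2: "v \<in> V \<Longrightarrow> ev v \<in> ell2 V"
  using ell2_finsupp[of "{v}" V "ev v"] by (simp add: ev_def)

lemma restr_ell2: "finite A \<Longrightarrow> A \<subseteq> V \<Longrightarrow> (\<lambda>x. if x \<in> A then f x else 0) \<in> ell2 V"
  using ell2_finsupp[of A V "\<lambda>x. if x \<in> A then f x else 0"] by auto

lemma lin_finsum:
  assumes lin: "linear_op V T" and A: "finite A" "A \<subseteq> V"
  shows "T (\<lambda>x. if x \<in> A then f x else 0) = (\<lambda>y. \<Sum>v\<in>A. f v * T (ev v) y)"
  using A
proof (induction A rule: finite_induct)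
  case empty
  then show ?case using lin_zero[OF lin] by simp
next
  case (insert v A)
  have eq: "(\<lambda>x. if x \<in> insert v A then f x else 0) = (\<lambda>x. f v * ev v x + (if x \<in> A then f x else 0))"
    using insert(2) by (auto simp: ev_def)
  have "T (\<lambda>x. f v * ev v x + (if x \<in> A then f x else 0)) =
      (\<lambda>x. f v * T (ev v) x + T (\<lambda>x. if x \<in> A then f x else 0) x)"
    by (rule lin_comb[OF lin]) (use insert in \<open>auto intro: ev_ell2 restr_ell2\<close>)
  then show ?case using insert eq by simp
qed

lemma ell2_sum:
  assumes "finite A" "\<And>v. v \<in> A \<Longrightarrow> g v \<in> ell2 V"
  shows "(\<lambda>y. \<Sum>v\<in>A. g v y) \<in> ell2 V \<and> ell2_norm V (\<lambda>y. \<Sum>v\<in>A. g v y) \<le> (\<Sum>v\<in>A. ell2_norm V (g v))"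
  using assms
proof (induction A rule: finite_induct)
  case empty
  then show ?case using ell2_zero[of V] by (simp add: ell2_norm_zero)
next
  case (insert v A)
  then have IH: "(\<lambda>y. \<Sum>v\<in>A. g v y) \<in> ell2 V \<and> ell2_norm V (\<lambda>y. \<Sum>v\<in>A. g v y) \<le> (\<Sum>v\<in>A. ell2_norm V (g v))"
    by auto
  have gv: "g v \<in> ell2 V" using insert by auto
  have "(\<lambda>y. g v y + (\<Sum>v\<in>A. g v y)) \<in> ell2 V \<and>
    ell2_norm V (\<lambda>y. g v y + (\<Sum>v\<in>A. g v y)) \<le> ell2_norm V (g v) + ell2_norm V (\<lambda>y. \<Sum>v\<in>A. g v y)"
    by (rule ell2_add[OF gv conjunct1[OF IH]])
  then show ?case using IH insert by auto
qed

section \<open>Bolzano--Weierstrass on finite sets and diagonal extraction\<close>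

lemma bw_finite:
  fixes g :: "nat \<Rightarrow> 'v \<Rightarrow> complex"
  assumes "finite A" "\<And>k x. x \<in> A \<Longrightarrow> cmod (g k x) \<le> B"
  shows "\<exists>r. strict_mono r \<and> (\<forall>x\<in>A. convergent (\<lambda>k. g (r k) x))"
  using assms
proof (induction A arbitrary: g rule: finite_induct)
  case empty
  then show ?case by (auto intro: exI[of _ id] simp: strict_mono_def)
next
  case (insert v A)
  have "\<exists>r. strict_mono r \<and> (\<forall>x\<in>A. convergent (\<lambda>k. g (r k) x))"
    by (rule insert.IH) (use insert.prems in auto)
  then obtain r where r: "strict_mono r" "\<forall>x\<in>A. convergent (\<lambda>k. g (r k) x)"
    by blast
  have "bounded (range (\<lambda>k. g (r k) v))"
    using insert(4) by (auto simp: bounded_iff)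
  then obtain l r' where r': "strict_mono r'" "((\<lambda>k. g (r k) v) \<circ> r') \<longlonglongrightarrow> l"
    using bounded_imp_convergent_subsequence by blast
  have "\<forall>x\<in>insert v A. convergent (\<lambda>k. g ((r \<circ> r') k) x)"
  proof
    fix x assume "x \<in> insert v A"
    then show "convergent (\<lambda>k. g ((r \<circ> r') k) x)"
    proof
      assume "x = v" then show ?thesis using r' by (auto simp: convergent_def o_def)
    next
      assume "x \<in> A"
      then have "convergent ((\<lambda>k. g (r k) x) \<circ> r')"
        using r r' by (intro convergent_subseq_convergent) auto
      then show ?thesis by (simp add: o_def)
    qed
  qed
  moreover have "strict_mono (r \<circ> r')" using r r' by (simp add: strict_mono_o)
  ultimately show ?case by blast
qed

lemma diag_conv:
  fixes g :: "nat \<Rightarrow> 'v \<Rightarrow> complex" and A :: "nat \<Rightarrow> 'v set"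
  assumes fin: "\<And>L. finite (A L)" and bd: "\<And>k x L. x \<in> A L \<Longrightarrow> cmod (g k x) \<le> B"
  shows "\<exists>r. strict_mono r \<and> (\<forall>L. \<forall>x\<in>A L. convergent (\<lambda>k. g (r k) x))"
proof -
  define P where "P = (\<lambda>L (s::nat\<Rightarrow>nat). \<forall>x\<in>A L. convergent (\<lambda>k. g (s k) x))"
  interpret subseqs P
  proof
    fix n and s :: "nat \<Rightarrow> nat" assume "strict_mono s"
    obtain r where "strict_mono r" "\<forall>x\<in>A n. convergent (\<lambda>k. g (s (r k)) x)"
      using bw_finite[OF fin, of n "\<lambda>k. g (s k)" B] bd by blast
    then show "\<exists>r'. strict_mono r' \<and> P n (s \<circ> r')" unfolding P_def by (auto simp: o_def)
  qed
  have stable: "\<And>(r::nat\<Rightarrow>nat) s n. strict_mono r \<Longrightarrow> P n s \<Longrightarrow> P n (s \<circ> r)"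
  proof -
    fix r s :: "nat \<Rightarrow> nat" and n :: nat assume "strict_mono r" "P n s"
    then show "P n (s \<circ> r)" unfolding P_def
      using convergent_subseq_convergent[of "\<lambda>k. g (s k) _" r] by (auto simp: o_def)
  qed
  have "\<forall>L. \<forall>x\<in>A L. convergent (\<lambda>k. g (diagseq k) x)"
  proof (intro allI ballI)
    fix L x assume x: "x \<in> A L"
    have "P L (diagseq \<circ> ((+) (Suc L)))" by (rule diagseq_holds[OF stable])
    then have "convergent (\<lambda>k. g (diagseq (k + Suc L)) x)" using x
      unfolding P_def by (simp add: o_def add.commute)
    then show "convergent (\<lambda>k. g (diagseq k) x)"
      using convergent_ignore_initial_segment[of "\<lambda>k. g (diagseq k) x" "Suc L"] by simp
  qed
  then show ?thesis using subseq_diagseq by blast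
qed



section \<open>Compactness criterion\<close>

lemma compact_crit:
  fixes T :: "('v \<Rightarrow> complex) \<Rightarrow> ('v \<Rightarrow> complex)" and lev :: "'v \<Rightarrow> nat"
  assumes lin: "linear_op V T"
    and lvfin: "\<And>L. finite {x\<in>V. lev x \<le> L}"
    and tail: "\<And>\<epsilon>. \<epsilon> > 0 \<Longrightarrow> \<exists>L. \<forall>f\<in>ell2 V. (\<forall>x\<in>V. lev x \<le> L \<longrightarrow> f x = 0) \<longrightarrow>
                  ell2_norm V (T f) \<le> \<epsilon> * ell2_norm V f"
  shows "compact_operator_ell2 V T"
  unfolding compact_operator_ell2_def
proof (intro conjI allI impI lin)
  fix f :: "nat \<Rightarrow> 'v \<Rightarrow> complex" and B :: real
  assume fB: "\<forall>n. f n \<in> ell2 V \<and> ell2_norm V (f n) \<le> B"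
  have B0: "B \<ge> 0"
  proof -
    have "ell2_norm V (f 0) \<le> B" using fB by blast
    then show ?thesis using ell2_norm_nonneg[of V "f 0"] by linarith
  qed
  define A where "A L = {x\<in>V. lev x \<le> L}" for L
  have Afin: "finite (A L)" for L unfolding A_def by (rule lvfin)
  have bd: "cmod (f k x) \<le> B" if "x \<in> A L" for k x L
  proof -
    have xV: "x \<in> V" using that by (simp add: A_def)
    have "cmod (f k x) \<le> ell2_norm V (f k)" using ell2_point[of "f k" V x] fB xV by blast
    also have "\<dots> \<le> B" using fB by blast
    finally show ?thesis .
  qed
  obtain r where r: "strict_mono r" "\<forall>L. \<forall>x\<in>A L. convergent (\<lambda>k. f (r k) x)"
  proof -
    have "\<exists>r. strict_mono r \<and> (\<forall>L. \<forall>x\<in>A L. convergent (\<lambda>k. f (r k) x))"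
      by (rule diag_conv[where B=B, OF Afin]) (erule bd)
    then show ?thesis using that by blast
  qed
  have conv: "convergent (\<lambda>k. f (r k) x)" if "x \<in> V" for x
    using r(2) that unfolding A_def by blast
  define \<phi> where "\<phi> x = (if x \<in> V then lim (\<lambda>k. f (r k) x) else 0)" for x
  have phi_lim: "(\<lambda>k. f (r k) x) \<longlonglongrightarrow> \<phi> x" if "x \<in> V" for x
    using conv[OF that] that by (simp add: \<phi>_def convergent_LIMSEQ_iff)
  have phi: "\<phi> \<in> ell2 V \<and> ell2_norm V \<phi> \<le> B"
  proof (rule ell2I[OF _ B0])
    show "\<And>x. x \<notin> V \<Longrightarrow> \<phi> x = 0" by (simp add: \<phi>_def)
    fix F assume F: "finite F" "F \<subseteq> V"
    have "(\<lambda>k. \<Sum>x\<in>F. (cmod (f (r k) x))\<^sup>2) \<longlonglongrightarrow> (\<Sum>x\<in>F. (cmod (\<phi> x))\<^sup>2)"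
      by (intro tendsto_intros phi_lim) (use F in auto)
    moreover have "\<forall>k. (\<Sum>x\<in>F. (cmod (f (r k) x))\<^sup>2) \<le> B\<^sup>2"
    proof
      fix k
      have "(\<Sum>x\<in>F. (cmod (f (r k) x))\<^sup>2) \<le> (ell2_norm V (f (r k)))\<^sup>2"
        using ell2_fin[of "f (r k)" V F] fB F by auto
      also have "\<dots> \<le> B\<^sup>2" using fB ell2_norm_nonneg by (intro power_mono) auto
      finally show "(\<Sum>x\<in>F. (cmod (f (r k) x))\<^sup>2) \<le> B\<^sup>2" .
    qed
    ultimately show "(\<Sum>x\<in>F. (cmod (\<phi> x))\<^sup>2) \<le> B\<^sup>2"
      by (intro LIMSEQ_le_const2) auto
  qed
  define h where "h k = (\<lambda>x. f (r k) x - \<phi> x)" for k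
  have h: "h k \<in> ell2 V \<and> ell2_norm V (h k) \<le> 2 * B" for k
  proof -
    have fk: "f (r k) \<in> ell2 V" "ell2_norm V (f (r k)) \<le> B" using fB by blast+
    have "h k \<in> ell2 V \<and> ell2_norm V (h k) \<le> ell2_norm V (f (r k)) + ell2_norm V \<phi>"
      unfolding h_def by (rule ell2_diff[OF fk(1) conjunct1[OF phi]])
    then show ?thesis using fk(2) phi by linarith
  qed
  have h0: "(\<lambda>k. h k x) \<longlonglongrightarrow> 0" if "x \<in> V" for x
    using tendsto_diff[OF phi_lim[OF that] tendsto_const[of "\<phi> x"]] by (simp add: h_def)
  have Th: "(\<lambda>x. T (f (r k)) x - T \<phi> x) = T (h k)" for k
    unfolding h_def using lin_diff[OF lin, of "f (r k)" \<phi>] fB phi by simp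
  have "(\<lambda>k. ell2_norm V (T (h k))) \<longlonglongrightarrow> 0"
  proof (rule LIMSEQ_I)
    fix \<epsilon> :: real assume e: "\<epsilon> > 0"
    define e' where "e' = \<epsilon> / (4 * B + 1)"
    have e'0: "e' > 0" using e B0 by (simp add: e'_def)
    obtain L where L: "\<forall>f\<in>ell2 V. (\<forall>x\<in>V. lev x \<le> L \<longrightarrow> f x = 0) \<longrightarrow>
                  ell2_norm V (T f) \<le> e' * ell2_norm V f"
      using tail[OF e'0] by blast
    define a where "a k = (\<lambda>x. if x \<in> A L then h k x else 0)" for k
    define b where "b k = (\<lambda>x. if x \<in> - A L then h k x else 0)" for k
    have a: "a k \<in> ell2 V" for k unfolding a_def by (rule restr_ell2) (auto simp: A_def lvfin)
    have b: "b k \<in> ell2 V \<and> ell2_norm V (b k) \<le> ell2_norm V (h k)" for k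
      unfolding b_def by (rule ell2_restrict) (use h in auto)
    have hab: "h k = (\<lambda>x. a k x + b k x)" for k by (auto simp: a_def b_def)
    have Tb: "ell2_norm V (T (b k)) \<le> \<epsilon> / 2" for k
    proof -
      have van: "\<forall>x\<in>V. lev x \<le> L \<longrightarrow> b k x = 0" by (auto simp: b_def A_def)
      have "ell2_norm V (T (b k)) \<le> e' * ell2_norm V (b k)"
        using L conjunct1[OF b[of k]] van by blast
      also have "\<dots> \<le> e' * (2 * B)" using b[of k] h[of k] e'0 by (intro mult_left_mono) auto
      also have "\<dots> \<le> \<epsilon> / 2" using e B0 by (simp add: e'_def field_simps)
      finally show ?thesis .
    qed
    have Ta: "T (a k) = (\<lambda>y. \<Sum>v\<in>A L. h k v * T (ev v) y)" for k
      unfolding a_def by (rule lin_finsum[OF lin Afin]) (auto simp: A_def)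
    have Ta_bd: "ell2_norm V (T (a k)) \<le> (\<Sum>v\<in>A L. cmod (h k v) * ell2_norm V (T (ev v)))" for k
    proof -
      have ev: "T (ev v) \<in> ell2 V" if "v \<in> A L" for v
        using lin_in[OF lin ev_ell2] that by (auto simp: A_def)
      have "ell2_norm V (\<lambda>y. \<Sum>v\<in>A L. h k v * T (ev v) y) \<le> (\<Sum>v\<in>A L. ell2_norm V (\<lambda>y. h k v * T (ev v) y))"
        by (rule conjunct2[OF ell2_sum[OF Afin]]) (use ell2_scale ev in blast)
      also have "\<dots> \<le> (\<Sum>v\<in>A L. cmod (h k v) * ell2_norm V (T (ev v)))"
        by (rule sum_mono) (use ell2_scale ev in blast)
      finally show ?thesis using Ta by simp
    qed
    have "(\<lambda>k. \<Sum>v\<in>A L. cmod (h k v) * ell2_norm V (T (ev v))) \<longlonglongrightarrow> (\<Sum>v\<in>A L. 0 * ell2_norm V (T (ev v)))"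
      by (intro tendsto_intros tendsto_norm_zero h0) (auto simp: A_def)
    then have "eventually (\<lambda>k. (\<Sum>v\<in>A L. cmod (h k v) * ell2_norm V (T (ev v))) < \<epsilon> / 2) sequentially"
      using e by (intro order_tendstoD) auto
    then obtain N where N: "\<And>k. k \<ge> N \<Longrightarrow> (\<Sum>v\<in>A L. cmod (h k v) * ell2_norm V (T (ev v))) < \<epsilon> / 2"
      by (auto simp: eventually_sequentially)
    show "\<exists>N. \<forall>k\<ge>N. norm (ell2_norm V (T (h k)) - 0) < \<epsilon>"
    proof (intro exI allI impI)
      fix k assume k: "k \<ge> N"
      have "T (h k) = (\<lambda>x. T (a k) x + T (b k) x)"
        unfolding hab by (rule lin_add[OF lin a conjunct1[OF b]])
      then have "ell2_norm V (T (h k)) \<le> ell2_norm V (T (a k)) + ell2_norm V (T (b k))"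
        using ell2_add[OF lin_in[OF lin a] lin_in[OF lin conjunct1[OF b]]] by simp
      also have "\<dots> < \<epsilon>" using Ta_bd[of k] N[OF k] Tb[of k] by linarith
      finally show "norm (ell2_norm V (T (h k)) - 0) < \<epsilon>" using ell2_norm_nonneg[of V "T (h k)"] by simp
    qed
  qed
  then show "\<exists>r g. strict_mono r \<and> g \<in> ell2 V \<and> (\<lambda>n. ell2_norm V (\<lambda>x. T (f (r n)) x - g x)) \<longlonglongrightarrow> 0"
    using r(1) lin_in[OF lin conjunct1[OF phi]] Th by (intro exI[of _ r] exI[of _ "T \<phi>"]) auto
qed


lemma inner_summable:
  assumes "f \<in> ell2 V" "g \<in> ell2 V"
  shows "(\<lambda>x. cnj (f x) * g x) summable_on V"
proof -
  have s: "(\<lambda>x. ((cmod (f x))\<^sup>2 + (cmod (g x))\<^sup>2) / 2) summable_on V"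
    using summable_on_cmult_left[OF summable_on_add[OF ell2_summable[OF assms(1)] ell2_summable[OF assms(2)]], of "1/2"]
    by simp
  have "(\<lambda>x. norm (cnj (f x) * g x)) summable_on V"
  proof (rule summable_on_comparison_test[OF s])
    fix x
    have "cmod (f x) * cmod (g x) \<le> ((cmod (f x))\<^sup>2 + (cmod (g x))\<^sup>2) / 2"
      using sum_squares_bound[of "cmod (f x)" "cmod (g x)"] by (simp add: power2_eq_square)
    then show "norm (cnj (f x) * g x) \<le> ((cmod (f x))\<^sup>2 + (cmod (g x))\<^sup>2) / 2"
      by (simp add: norm_mult)
  qed simp
  then show ?thesis using summable_on_iff_abs_summable_on_complex by blast
qed

locale shiftop =
  fixes V :: "'v set" and D :: "'v set" and p :: "'v \<Rightarrow> 'v" and lam :: "'v \<Rightarrow> complex" and K :: real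
  assumes DV: "D \<subseteq> V" and pV: "\<And>w. w \<in> D \<Longrightarrow> p w \<in> V"
    and finCh: "\<And>v. v \<in> V \<Longrightarrow> finite {w\<in>D. p w = v}"
    and Kb: "\<And>v. v \<in> V \<Longrightarrow> real (card {w\<in>D. p w = v}) * (cmod (lam v))\<^sup>2 \<le> K"
    and K0: "K \<ge> 0"
begin

definition Ch where "Ch v = {w\<in>D. p w = v}"
definition Sh :: "('v \<Rightarrow> complex) \<Rightarrow> ('v \<Rightarrow> complex)" where
  "Sh f = (\<lambda>w. if w \<in> D then lam (p w) * f (p w) else 0)"
definition Sa :: "('v \<Rightarrow> complex) \<Rightarrow> ('v \<Rightarrow> complex)" where
  "Sa g = (\<lambda>v. if v \<in> V then cnj (lam v) * (\<Sum>w\<in>Ch v. g w) else 0)"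

lemma Sh_ell2:
  assumes f: "f \<in> ell2 V"
  shows "Sh f \<in> ell2 V \<and> ell2_norm V (Sh f) \<le> sqrt K * ell2_norm V f"
proof (rule ell2I)
  show "\<And>x. x \<notin> V \<Longrightarrow> Sh f x = 0" using DV by (auto simp: Sh_def)
  show "0 \<le> sqrt K * ell2_norm V f" using K0 ell2_norm_nonneg[of V f] by simp
  fix F assume F: "finite F" "F \<subseteq> V"
  have FD: "finite (F \<inter> D)" using F by simp
  have "(\<Sum>w\<in>F. (cmod (Sh f w))\<^sup>2) = (\<Sum>w\<in>F \<inter> D. (cmod (lam (p w)))\<^sup>2 * (cmod (f (p w)))\<^sup>2)"
    by (rule sum.mono_neutral_cong_right) (use F in \<open>auto simp: Sh_def norm_mult power_mult_distrib\<close>)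
  also have "\<dots> = (\<Sum>v\<in>p ` (F \<inter> D). \<Sum>w\<in>{w. w \<in> F \<inter> D \<and> p w = v}. (cmod (lam (p w)))\<^sup>2 * (cmod (f (p w)))\<^sup>2)"
    by (rule sum.image_gen[OF FD])
  also have "\<dots> = (\<Sum>v\<in>p ` (F \<inter> D). real (card {w. w \<in> F \<inter> D \<and> p w = v}) * ((cmod (lam v))\<^sup>2 * (cmod (f v))\<^sup>2))"
    by (rule sum.cong) auto
  also have "\<dots> \<le> (\<Sum>v\<in>p ` (F \<inter> D). K * (cmod (f v))\<^sup>2)"
  proof (rule sum_mono)
    fix v assume v: "v \<in> p ` (F \<inter> D)"
    then have vV: "v \<in> V" using pV by auto
    have "card {w. w \<in> F \<inter> D \<and> p w = v} \<le> card {w\<in>D. p w = v}"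
      by (rule card_mono[OF finCh[OF vV]]) auto
    then have "real (card {w. w \<in> F \<inter> D \<and> p w = v}) * (cmod (lam v))\<^sup>2 \<le> K"
      using Kb[OF vV] by (meson mult_right_mono of_nat_le_iff order_trans zero_le_power2)
    then show "real (card {w. w \<in> F \<inter> D \<and> p w = v}) * ((cmod (lam v))\<^sup>2 * (cmod (f v))\<^sup>2) \<le> K * (cmod (f v))\<^sup>2"
      by (metis mult.assoc mult_right_mono zero_le_power2)
  qed
  also have "\<dots> = K * (\<Sum>v\<in>p ` (F \<inter> D). (cmod (f v))\<^sup>2)" by (simp add: sum_distrib_left)
  also have "\<dots> \<le> K * (ell2_norm V f)\<^sup>2"
    by (intro mult_left_mono ell2_fin[OF f] K0) (use F pV in auto)
  also have "\<dots> = (sqrt K * ell2_norm V f)\<^sup>2" using K0 by (simp add: power_mult_distrib)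
  finally show "(\<Sum>w\<in>F. (cmod (Sh f w))\<^sup>2) \<le> (sqrt K * ell2_norm V f)\<^sup>2" .
qed

lemma Sh_lin: "linear_op V Sh"
  unfolding linear_op_def using Sh_ell2 by (auto simp: Sh_def fun_eq_iff algebra_simps)

lemma Sh_bounded: "bounded_op V Sh"
  unfolding bounded_op_def using Sh_lin Sh_ell2 by blast

lemma Ch_disj: "v \<noteq> v' \<Longrightarrow> Ch v \<inter> Ch v' = {}"
  by (auto simp: Ch_def)

lemma Sa_ell2:
  assumes g: "g \<in> ell2 V"
  shows "Sa g \<in> ell2 V \<and> ell2_norm V (Sa g) \<le> sqrt K * ell2_norm V g"
proof (rule ell2I)
  show "\<And>x. x \<notin> V \<Longrightarrow> Sa g x = 0" by (auto simp: Sa_def)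
  show "0 \<le> sqrt K * ell2_norm V g" using K0 ell2_norm_nonneg[of V g] by simp
  fix F assume F: "finite F" "F \<subseteq> V"
  have fch: "finite (Ch v)" if "v \<in> F" for v using finCh F that by (auto simp: Ch_def)
  have "(\<Sum>v\<in>F. (cmod (Sa g v))\<^sup>2) = (\<Sum>v\<in>F. (cmod (lam v))\<^sup>2 * (cmod (\<Sum>w\<in>Ch v. g w))\<^sup>2)"
    by (rule sum.cong) (use F in \<open>auto simp: Sa_def norm_mult power_mult_distrib\<close>)
  also have "\<dots> \<le> (\<Sum>v\<in>F. K * (\<Sum>w\<in>Ch v. (cmod (g w))\<^sup>2))"
  proof (rule sum_mono)
    fix v assume v: "v \<in> F"
    have "(cmod (\<Sum>w\<in>Ch v. g w))\<^sup>2 \<le> (\<Sum>w\<in>Ch v. cmod (g w))\<^sup>2"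
      by (intro power_mono norm_sum) auto
    also have "\<dots> \<le> (\<Sum>w\<in>Ch v. (cmod (g w))\<^sup>2) * card (Ch v)"
      by (rule sum_squared_le_sum_of_squares)
    finally have a: "(cmod (\<Sum>w\<in>Ch v. g w))\<^sup>2 \<le> (\<Sum>w\<in>Ch v. (cmod (g w))\<^sup>2) * card (Ch v)" .
    have b: "real (card (Ch v)) * (cmod (lam v))\<^sup>2 \<le> K" using Kb F v by (auto simp: Ch_def)
    have "(cmod (lam v))\<^sup>2 * (cmod (\<Sum>w\<in>Ch v. g w))\<^sup>2 \<le> (cmod (lam v))\<^sup>2 * ((\<Sum>w\<in>Ch v. (cmod (g w))\<^sup>2) * card (Ch v))"
      using a by (intro mult_left_mono) auto
    also have "\<dots> = (real (card (Ch v)) * (cmod (lam v))\<^sup>2) * (\<Sum>w\<in>Ch v. (cmod (g w))\<^sup>2)" by simp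
    also have "\<dots> \<le> K * (\<Sum>w\<in>Ch v. (cmod (g w))\<^sup>2)"
      using b by (intro mult_right_mono) (auto intro: sum_nonneg)
    finally show "(cmod (lam v))\<^sup>2 * (cmod (\<Sum>w\<in>Ch v. g w))\<^sup>2 \<le> K * (\<Sum>w\<in>Ch v. (cmod (g w))\<^sup>2)" .
  qed
  also have "\<dots> = K * (\<Sum>w\<in>(\<Union>v\<in>F. Ch v). (cmod (g w))\<^sup>2)"
    by (subst sum.UNION_disjoint) (use F fch Ch_disj in \<open>auto simp: sum_distrib_left\<close>)
  also have "\<dots> \<le> K * (ell2_norm V g)\<^sup>2"
    by (intro mult_left_mono ell2_fin[OF g] K0) (use F fch DV in \<open>auto simp: Ch_def\<close>)
  also have "\<dots> = (sqrt K * ell2_norm V g)\<^sup>2" using K0 by (simp add: power_mult_distrib)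
  finally show "(\<Sum>v\<in>F. (cmod (Sa g v))\<^sup>2) \<le> (sqrt K * ell2_norm V g)\<^sup>2" .
qed

lemma Sa_lin: "linear_op V Sa"
  unfolding linear_op_def using Sa_ell2
  by (auto simp: Sa_def fun_eq_iff algebra_simps sum.distrib sum_distrib_left)

lemma adj_identity:
  assumes f: "f \<in> ell2 V" and g: "g \<in> ell2 V"
  shows "ell2_inner V (Sh f) g = ell2_inner V f (Sa g)"
proof -
  define H where "H = (\<lambda>(v, w). cnj (lam v * f v) * g w)"
  have bij: "bij_betw (\<lambda>w. (p w, w)) D (Sigma V Ch)"
    by (rule bij_betwI[where g=snd]) (auto simp: Ch_def pV)
  have "ell2_inner V (Sh f) g = (\<Sum>\<^sub>\<infinity>w\<in>D. H (p w, w))"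
    unfolding ell2_inner_def
    by (rule infsum_cong_neutral) (use DV in \<open>auto simp: Sh_def H_def\<close>)
  also have "\<dots> = infsum H (Sigma V Ch)"
    by (rule infsum_reindex_bij_betw[OF bij])
  also have "\<dots> = (\<Sum>\<^sub>\<infinity>v\<in>V. \<Sum>\<^sub>\<infinity>w\<in>Ch v. H (v, w))"
  proof (rule infsum_Sigma_banach[symmetric])
    have "(\<lambda>x. cnj (Sh f x) * g x) summable_on V"
      by (rule inner_summable[OF conjunct1[OF Sh_ell2[OF f]] g])
    then have "(\<lambda>x. cnj (Sh f x) * g x) summable_on D" using DV by (rule summable_on_subset_banach)
    then have "(\<lambda>w. H (p w, w)) summable_on D"
      by (rule summable_on_cong[THEN iffD1, rotated]) (auto simp: Sh_def H_def)
    then show "H summable_on Sigma V Ch" using summable_on_reindex_bij_betw[OF bij] by blast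
  qed
  also have "\<dots> = (\<Sum>\<^sub>\<infinity>v\<in>V. cnj (f v) * Sa g v)"
  proof (rule infsum_cong)
    fix v assume v: "v \<in> V"
    have "finite (Ch v)" using finCh v by (simp add: Ch_def)
    then show "(\<Sum>\<^sub>\<infinity>w\<in>Ch v. H (v, w)) = cnj (f v) * Sa g v"
      using v by (simp add: H_def Sa_def sum_distrib_left mult_ac)
  qed
  finally show ?thesis by (simp add: ell2_inner_def)
qed

lemma is_adj: "is_adjoint V Sh Sa"
  unfolding is_adjoint_def using Sa_ell2 adj_identity by blast

end


locale rtree =
  fixes V :: "'a set" and chi :: "'a \<Rightarrow> 'a set"
  assumes rdt: "rooted_directed_tree V chi"
    and lf: "locally_finite_tree V chi"
    and ll: "leafless_tree V chi"
begin

abbreviation "Ed \<equiv> tree_edges V chi"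
abbreviation "rt \<equiv> tree_root V chi"
abbreviation "dep \<equiv> tree_depth V chi"

lemmas rdt_all = rdt[unfolded rooted_directed_tree_def]

lemma rdt1: "\<forall>u\<in>V. chi u \<subseteq> V"
  using rdt_all by (rule conjunct1)
lemma rdt3: "\<forall>u\<in>V. \<forall>v\<in>V. (u, v) \<in> (Ed \<union> Ed\<inverse>)\<^sup>*"
  using conjunct1[OF conjunct2[OF conjunct2[OF rdt_all]]] .
lemma rdt4: "\<forall>u1 u2 v. (u1, v) \<in> Ed \<longrightarrow> (u2, v) \<in> Ed \<longrightarrow> u1 = u2"
  using conjunct1[OF conjunct2[OF conjunct2[OF conjunct2[OF rdt_all]]]] .
lemma rdt5: "\<exists>!r. r \<in> V \<and> \<not> (\<exists>u. (u, r) \<in> Ed)"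
  using conjunct2[OF conjunct2[OF conjunct2[OF conjunct2[OF rdt_all]]]] .

lemma chiV: "u \<in> V \<Longrightarrow> chi u \<subseteq> V"
  using rdt1 by blast

lemma chi_fin: "u \<in> V \<Longrightarrow> finite (chi u)"
  using lf by (simp add: locally_finite_tree_def)

lemma chi_ne: "u \<in> V \<Longrightarrow> chi u \<noteq> {}"
  using ll by (simp add: leafless_tree_def)

lemma chi_card: "u \<in> V \<Longrightarrow> card (chi u) \<ge> 1"
  using chi_fin chi_ne by (simp add: Suc_le_eq card_gt_0_iff)

lemma uniq_par: "u1 \<in> V \<Longrightarrow> u2 \<in> V \<Longrightarrow> x \<in> chi u1 \<Longrightarrow> x \<in> chi u2 \<Longrightarrow> u1 = u2"
  using rdt4 unfolding tree_edges_def by blast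

lemma conn: "u \<in> V \<Longrightarrow> v \<in> V \<Longrightarrow> (u, v) \<in> (Ed \<union> Ed\<inverse>)\<^sup>*"
  using rdt3 by blast

lemma root_prop: "rt \<in> V \<and> \<not> (\<exists>u. (u, rt) \<in> Ed)"
proof -
  have "\<exists>!r. r \<in> V \<and> \<not> (\<exists>u. (u, r) \<in> Ed)"
    using rdt5 by blast
  then show ?thesis unfolding tree_root_def by (rule theI')
qed

lemma root_V: "rt \<in> V" using root_prop by blast

lemma root_not_child: "u \<in> V \<Longrightarrow> rt \<notin> chi u"
  using root_prop by (auto simp: tree_edges_def)

lemma chi_pow_V: "chi_pow chi n {rt} \<subseteq> V"
  by (induction n) (use root_V chiV in auto)

lemma chi_pow_fin: "finite (chi_pow chi n {rt})"
proof (induction n)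
  case 0 then show ?case by simp
next
  case (Suc n)
  then show ?case using chi_pow_V chi_fin by auto
qed

lemma all_desc:
  assumes "x \<in> V" shows "\<exists>n. x \<in> chi_pow chi n {rt}"
proof -
  have "(rt, x) \<in> (Ed \<union> Ed\<inverse>)\<^sup>*" using conn[OF root_V assms] .
  then show ?thesis
  proof (induction rule: rtrancl_induct)
    case base
    have "rt \<in> chi_pow chi 0 {rt}" by simp
    then show ?case by blast
  next
    case (step y z)
    then obtain n where n: "y \<in> chi_pow chi n {rt}" by blast
    from step(2) show ?case
    proof
      assume "(y, z) \<in> Ed"
      then have "z \<in> chi y" by (simp add: tree_edges_def)
      then have "z \<in> chi_pow chi (Suc n) {rt}" using n by auto
      then show ?thesis by blast
    next
      assume "(y, z) \<in> Ed\<inverse>"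
      then have z: "z \<in> V" "y \<in> chi z" by (auto simp: tree_edges_def)
      show ?thesis
      proof (cases n)
        case 0
        then have "y = rt" using n by simp
        then show ?thesis using z root_not_child by blast
      next
        case (Suc m)
        then obtain u where u: "u \<in> chi_pow chi m {rt}" "y \<in> chi u" using n by auto
        have "u = z" using uniq_par[OF _ z(1) u(2) z(2)] u(1) chi_pow_V by blast
        then show ?thesis using u by blast
      qed
    qed
  qed
qed

lemma depth_unique:
  "x \<in> chi_pow chi n {rt} \<Longrightarrow> x \<in> chi_pow chi m {rt} \<Longrightarrow> n = m"
proof (induction n arbitrary: x m)
  case 0
  then have "x = rt" by simp
  then show ?case using 0 chi_pow_V root_not_child by (cases m) auto
next
  case (Suc n)
  then obtain u where u: "u \<in> chi_pow chi n {rt}" "x \<in> chi u" by auto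
  show ?case
  proof (cases m)
    case 0
    then have "x = rt" using Suc by simp
    then show ?thesis using u chi_pow_V root_not_child by blast
  next
    case (Suc m')
    then obtain u' where u': "u' \<in> chi_pow chi m' {rt}" "x \<in> chi u'" using Suc.prems by auto
    have "u = u'" using uniq_par[OF _ _ u(2) u'(2)] u(1) u'(1) chi_pow_V by blast
    then show ?thesis using Suc.IH[OF u(1)] u'(1) Suc by simp
  qed
qed

lemma depth_eq: "x \<in> chi_pow chi n {rt} \<Longrightarrow> dep x = n"
  unfolding tree_depth_def by (rule Least_equality) (use depth_unique in auto)

lemma depth_mem: assumes "x \<in> V" shows "x \<in> chi_pow chi (dep x) {rt}"
proof -
  obtain n where n: "x \<in> chi_pow chi n {rt}" using all_desc[OF assms] by blast
  then have "dep x = n" by (rule depth_eq)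
  then show ?thesis using n by simp
qed

lemma depth_root: "dep rt = 0"
  by (rule depth_eq) simp

lemma depth_child: "u \<in> V \<Longrightarrow> x \<in> chi u \<Longrightarrow> dep x = Suc (dep u)"
  by (rule depth_eq) (use depth_mem in auto)

lemma depth_zero_iff: "x \<in> V \<Longrightarrow> dep x = 0 \<longleftrightarrow> x = rt"
  using depth_mem[of x] depth_root by auto

definition par :: "'a \<Rightarrow> 'a" where "par x = (THE u. u \<in> V \<and> x \<in> chi u)"

lemma par_ex: assumes "x \<in> V" "x \<noteq> rt" shows "\<exists>u\<in>V. x \<in> chi u"
proof -
  have "dep x \<noteq> 0" using depth_zero_iff assms by blast
  then obtain m where "dep x = Suc m" by (cases "dep x") auto
  then have "x \<in> chi_pow chi (Suc m) {rt}" using depth_mem[OF assms(1)] by simp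
  then obtain u where "u \<in> chi_pow chi m {rt}" "x \<in> chi u" by auto
  then show ?thesis using chi_pow_V by blast
qed

lemma par_eq: "u \<in> V \<Longrightarrow> x \<in> chi u \<Longrightarrow> par x = u"
  unfolding par_def by (rule the_equality) (auto intro: uniq_par)

lemma par_in: assumes "x \<in> V" "x \<noteq> rt" shows "par x \<in> V \<and> x \<in> chi (par x)"
  using par_ex[OF assms] par_eq by blast

lemma child_not_root: "u \<in> V \<Longrightarrow> x \<in> chi u \<Longrightarrow> x \<noteq> rt"
  using root_not_child by blast

lemma depth_par: "x \<in> V \<Longrightarrow> x \<noteq> rt \<Longrightarrow> dep x = Suc (dep (par x))"
  using par_in depth_child by blast

lemma level_fin: "finite {x\<in>V. dep x \<le> L}"
proof -
  have "{x\<in>V. dep x \<le> L} \<subseteq> (\<Union>k\<le>L. chi_pow chi k {rt})"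
    using depth_mem by auto
  then show ?thesis by (rule finite_subset) (auto intro: chi_pow_fin)
qed

lemma branch_bound:
  assumes "branching_index V chi \<noteq> \<infinity>"
  shows "\<exists>N. \<forall>w\<in>V. card (chi w) \<ge> 2 \<longrightarrow> dep w < N"
proof (cases "{w \<in> V. card (chi w) \<ge> 2} = {}")
  case True then show ?thesis by auto
next
  case False
  define W where "W = {w \<in> V. card (chi w) \<ge> 2}"
  have "branching_index V chi = 1 + (SUP w\<in>W. enat (dep w))"
    unfolding branching_index_def Let_def W_def[symmetric] using False by (simp add: W_def)
  then have "1 + (SUP w\<in>W. enat (dep w)) \<noteq> \<infinity>" using assms by simp
  then have "(SUP w\<in>W. enat (dep w)) \<noteq> \<infinity>"
  proof (rule contrapos_nn)
    assume "(SUP w\<in>W. enat (dep w)) = \<infinity>"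
    then show "1 + (SUP w\<in>W. enat (dep w)) = \<infinity>" by simp
  qed
  then obtain M where M: "(SUP w\<in>W. enat (dep w)) = enat M" by (cases "(SUP w\<in>W. enat (dep w))") auto
  have "dep w < Suc M" if "w \<in> W" for w
  proof -
    have "enat (dep w) \<le> enat M" using M that by (metis SUP_upper)
    then show ?thesis by simp
  qed
  then show ?thesis unfolding W_def by blast
qed

lemma card_bound:
  assumes "branching_index V chi \<noteq> \<infinity>"
  shows "\<exists>K. K \<ge> 1 \<and> (\<forall>u\<in>V. card (chi u) \<le> K)"
proof -
  obtain N where N: "\<forall>w\<in>V. card (chi w) \<ge> 2 \<longrightarrow> dep w < N" using branch_bound[OF assms] by blast
  define A where "A = {x\<in>V. dep x \<le> N}"
  have Af: "finite A" unfolding A_def by (rule level_fin)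
  define K where "K = Max (insert 1 ((\<lambda>u. card (chi u)) ` A))"
  have "card (chi u) \<le> K" if "u \<in> V" for u
  proof (cases "u \<in> A")
    case True then show ?thesis unfolding K_def using Af by (intro Max_ge) auto
  next
    case False
    then have "\<not> card (chi u) \<ge> 2" using N that by (auto simp: A_def)
    then have "card (chi u) \<le> 1" by simp
    moreover have "1 \<le> K" unfolding K_def using Af by (intro Max_ge) auto
    ultimately show ?thesis by simp
  qed
  moreover have "1 \<le> K" unfolding K_def using Af by (intro Max_ge) auto
  ultimately show ?thesis by blast
qed

end


lemma lin_commutator:
  assumes A: "linear_op V A" and B: "linear_op V B"
  shows "linear_op V (\<lambda>f x. A (B f) x - B (A f) x)"
  unfolding linear_op_def
proof (intro conjI ballI allI)
  fix f assume f: "f \<in> ell2 V"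
  show "(\<lambda>x. A (B f) x - B (A f) x) \<in> ell2 V"
    using ell2_diff[OF lin_in[OF A lin_in[OF B f]] lin_in[OF B lin_in[OF A f]]] by blast
next
  fix c f g assume f: "f \<in> ell2 V" and g: "g \<in> ell2 V"
  have "A (B (\<lambda>x. c * f x + g x)) = (\<lambda>x. c * A (B f) x + A (B g) x)"
    using lin_comb[OF B f g] lin_comb[OF A lin_in[OF B f] lin_in[OF B g]] by simp
  moreover have "B (A (\<lambda>x. c * f x + g x)) = (\<lambda>x. c * B (A f) x + B (A g) x)"
    using lin_comb[OF A f g] lin_comb[OF B lin_in[OF A f] lin_in[OF A g]] by simp
  ultimately show "(\<lambda>x. A (B (\<lambda>x. c * f x + g x)) x - B (A (\<lambda>x. c * f x + g x)) x) =
     (\<lambda>x. c * (A (B f) x - B (A f) x) + (A (B g) x - B (A g) x))"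
    by (simp add: fun_eq_iff algebra_simps)
qed

lemma tail_pointwise:
  fixes T :: "('v \<Rightarrow> complex) \<Rightarrow> ('v \<Rightarrow> complex)" and lev :: "'v \<Rightarrow> nat"
    and N :: "'v \<Rightarrow> 'v set" and \<delta> :: "nat \<Rightarrow> real" and K1 M :: nat
  assumes Tout: "\<And>f x. f \<in> ell2 V \<Longrightarrow> x \<notin> V \<Longrightarrow> T f x = 0"
    and Nfin: "\<And>x. x \<in> V \<Longrightarrow> finite (N x) \<and> N x \<subseteq> V \<and> card (N x) \<le> K1"
    and Nlev: "\<And>x t. x \<in> V \<Longrightarrow> t \<in> N x \<Longrightarrow> lev t = lev x"
    and mult: "\<And>t. t \<in> V \<Longrightarrow> finite {x\<in>V. t \<in> N x} \<and> card {x\<in>V. t \<in> N x} \<le> M"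
    and pw: "\<And>f x. f \<in> ell2 V \<Longrightarrow> x \<in> V \<Longrightarrow> cmod (T f x) \<le> \<delta> (lev x) * (\<Sum>t\<in>N x. cmod (f t))"
    and d0: "\<And>n. \<delta> n \<ge> 0" and dlim: "\<delta> \<longlonglongrightarrow> 0"
    and e: "\<epsilon> > 0"
  shows "\<exists>L. \<forall>f\<in>ell2 V. (\<forall>x\<in>V. lev x \<le> L \<longrightarrow> f x = 0) \<longrightarrow> ell2_norm V (T f) \<le> \<epsilon> * ell2_norm V f"
proof -
  define \<eta> where "\<eta> = \<epsilon> / (real K1 * real M + 1)"
  have den: "real K1 * real M + 1 > 0"
  proof -
    have "real K1 * real M \<ge> 0" by simp
    then show ?thesis by linarith
  qed
  have eta0: "\<eta> > 0" unfolding \<eta>_def using e den by (rule divide_pos_pos)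
  have etaK: "\<eta>\<^sup>2 * (real K1 * real M) \<le> \<epsilon>\<^sup>2"
  proof -
    define q where "q = real K1 * real M"
    have q0: "q \<ge> 0" by (simp add: q_def)
    have "\<eta>\<^sup>2 * q = \<epsilon>\<^sup>2 * (q / (q + 1)\<^sup>2)" by (simp add: \<eta>_def q_def power_divide)
    also have "\<dots> \<le> \<epsilon>\<^sup>2 * 1"
    proof (intro mult_left_mono)
      have "q \<le> (q + 1)\<^sup>2" using q0 by (simp add: power2_eq_square algebra_simps)
      then show "q / (q + 1)\<^sup>2 \<le> 1" using q0 by (simp add: divide_le_eq_1)
    qed simp
    finally show ?thesis by (simp add: q_def)
  qed
  obtain L where L: "\<And>n. n \<ge> L \<Longrightarrow> \<delta> n < \<eta>"
    using order_tendstoD(2)[OF dlim eta0] by (auto simp: eventually_sequentially)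
  show ?thesis
  proof (intro exI[of _ L] ballI impI)
    fix f assume f: "f \<in> ell2 V" and van: "\<forall>x\<in>V. lev x \<le> L \<longrightarrow> f x = 0"
    show "ell2_norm V (T f) \<le> \<epsilon> * ell2_norm V f"
    proof (rule conjunct2[OF ell2I])
      show "\<And>x. x \<notin> V \<Longrightarrow> T f x = 0" using Tout f by blast
      show "0 \<le> \<epsilon> * ell2_norm V f" using e ell2_norm_nonneg[of V f] by simp
      fix F assume F: "finite F" "F \<subseteq> V"
      define G where "G = (\<Union>x\<in>F. N x)"
      have Gf: "finite G" "G \<subseteq> V" using F Nfin unfolding G_def by blast+
      have step: "(cmod (T f x))\<^sup>2 \<le> \<eta>\<^sup>2 * real K1 * (\<Sum>t\<in>N x. (cmod (f t))\<^sup>2)" if x: "x \<in> F" for x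
      proof (cases "lev x \<le> L")
        case True
        have "\<forall>t\<in>N x. f t = 0" using van Nfin Nlev x F True by (metis subsetD)
        then have "cmod (T f x) \<le> 0" using pw[OF f, of x] x F by auto
        then show ?thesis by (simp add: sum_nonneg)
      next
        case False
        have xV: "x \<in> V" using x F by blast
        have dl: "\<delta> (lev x) \<le> \<eta>" using L[of "lev x"] False by simp
        have "cmod (T f x) \<le> \<eta> * (\<Sum>t\<in>N x. cmod (f t))"
          using pw[OF f xV] dl d0[of "lev x"] by (meson mult_right_mono order_trans sum_nonneg norm_ge_zero)
        then have "(cmod (T f x))\<^sup>2 \<le> (\<eta> * (\<Sum>t\<in>N x. cmod (f t)))\<^sup>2"
          by (intro power_mono) auto
        also have "\<dots> = \<eta>\<^sup>2 * (\<Sum>t\<in>N x. cmod (f t))\<^sup>2" by (simp add: power_mult_distrib)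
        also have "\<dots> \<le> \<eta>\<^sup>2 * ((\<Sum>t\<in>N x. (cmod (f t))\<^sup>2) * card (N x))"
          by (intro mult_left_mono sum_squared_le_sum_of_squares) auto
        also have "\<dots> \<le> \<eta>\<^sup>2 * ((\<Sum>t\<in>N x. (cmod (f t))\<^sup>2) * K1)"
          using Nfin[OF xV] by (intro mult_left_mono) (auto intro!: mult_left_mono sum_nonneg)
        finally show ?thesis by (simp add: mult_ac)
      qed
      have "(\<Sum>x\<in>F. (cmod (T f x))\<^sup>2) \<le> (\<Sum>x\<in>F. \<eta>\<^sup>2 * real K1 * (\<Sum>t\<in>N x. (cmod (f t))\<^sup>2))"
        by (rule sum_mono) (rule step)
      also have "\<dots> = \<eta>\<^sup>2 * real K1 * (\<Sum>x\<in>F. \<Sum>t\<in>{t. t \<in> G \<and> t \<in> N x}. (cmod (f t))\<^sup>2)"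
      proof -
        have "N x = {t. t \<in> G \<and> t \<in> N x}" if "x \<in> F" for x using that by (auto simp: G_def)
        then show ?thesis by (simp add: sum_distrib_left)
      qed
      also have "\<dots> = \<eta>\<^sup>2 * real K1 * (\<Sum>t\<in>G. \<Sum>x\<in>{x. x \<in> F \<and> t \<in> N x}. (cmod (f t))\<^sup>2)"
        by (subst sum.swap_restrict[OF F(1) Gf(1)]) simp
      also have "\<dots> \<le> \<eta>\<^sup>2 * real K1 * (\<Sum>t\<in>G. real M * (cmod (f t))\<^sup>2)"
      proof (intro mult_left_mono sum_mono)
        fix t assume t: "t \<in> G"
        then have tV: "t \<in> V" using Gf by blast
        have "card {x. x \<in> F \<and> t \<in> N x} \<le> card {x\<in>V. t \<in> N x}"
          by (rule card_mono) (use mult[OF tV] F in auto)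
        also have "\<dots> \<le> M" using mult[OF tV] by blast
        finally show "(\<Sum>x\<in>{x. x \<in> F \<and> t \<in> N x}. (cmod (f t))\<^sup>2) \<le> real M * (cmod (f t))\<^sup>2"
          by (simp add: mult_right_mono)
      qed auto
      also have "\<dots> = \<eta>\<^sup>2 * (real K1 * real M) * (\<Sum>t\<in>G. (cmod (f t))\<^sup>2)"
        by (simp add: sum_distrib_left mult_ac)
      also have "\<dots> \<le> \<epsilon>\<^sup>2 * (ell2_norm V f)\<^sup>2"
        using etaK ell2_fin[OF f Gf] by (intro mult_mono) (auto intro: sum_nonneg)
      also have "\<dots> = (\<epsilon> * ell2_norm V f)\<^sup>2" by (simp add: power_mult_distrib)
      finally show "(\<Sum>x\<in>F. (cmod (T f x))\<^sup>2) \<le> (\<epsilon> * ell2_norm V f)\<^sup>2" .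
    qed
  qed
qed


locale prodtree =
  fixes d :: nat and Vt :: "nat \<Rightarrow> 'a set" and ch :: "nat \<Rightarrow> 'a \<Rightarrow> 'a set" and a :: real
  assumes trees: "\<And>j. j < d \<Longrightarrow> rtree (Vt j) (ch j)" and apos: "a > 0"
begin

abbreviation "PV \<equiv> prod_V d Vt"
definition "rr j = tree_root (Vt j) (ch j)"
definition "pa j x = rtree.par (Vt j) (ch j) x"
abbreviation "dp j \<equiv> tree_depth (Vt j) (ch j)"
definition "Dj j = {w \<in> PV. w j \<noteq> rr j}"
definition "pj j w = w(j := pa j (w j))"
definition "lev v = alpha_abs d Vt ch v"
definition "lam j v = weight_Ca d Vt ch a j v"
abbreviation "al v j \<equiv> alpha Vt ch v j"

lemma PV_iff: "v \<in> PV \<longleftrightarrow> (\<forall>k<d. v k \<in> Vt k) \<and> (\<forall>k. k \<ge> d \<longrightarrow> v k = undefined)"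
  by (auto simp: prod_V_def PiE_iff extensional_def)

lemma upd_PV: "v \<in> PV \<Longrightarrow> j < d \<Longrightarrow> y \<in> Vt j \<Longrightarrow> v(j := y) \<in> PV"
  by (auto simp: PV_iff)

lemma PV_comp: "v \<in> PV \<Longrightarrow> j < d \<Longrightarrow> v j \<in> Vt j"
  by (auto simp: PV_iff)

lemma Dj_sub: "Dj j \<subseteq> PV" by (auto simp: Dj_def)

lemma pa_in: "j < d \<Longrightarrow> x \<in> Vt j \<Longrightarrow> x \<noteq> rr j \<Longrightarrow> pa j x \<in> Vt j \<and> x \<in> ch j (pa j x)"
  unfolding pa_def rr_def by (rule rtree.par_in[OF trees])

lemma pa_eq: "j < d \<Longrightarrow> u \<in> Vt j \<Longrightarrow> x \<in> ch j u \<Longrightarrow> pa j x = u"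
  unfolding pa_def by (rule rtree.par_eq[OF trees])

lemma child_nr: "j < d \<Longrightarrow> u \<in> Vt j \<Longrightarrow> x \<in> ch j u \<Longrightarrow> x \<noteq> rr j"
  unfolding rr_def by (rule rtree.child_not_root[OF trees])

lemma chV: "j < d \<Longrightarrow> u \<in> Vt j \<Longrightarrow> ch j u \<subseteq> Vt j"
  by (rule rtree.chiV[OF trees])

lemma pj_in: "j < d \<Longrightarrow> w \<in> Dj j \<Longrightarrow> pj j w \<in> PV"
  unfolding pj_def Dj_def using pa_in upd_PV PV_comp by blast

lemma Chi_char:
  assumes j: "j < d" and v: "v \<in> PV"
  shows "w \<in> prod_Chi d Vt ch j v \<longleftrightarrow> w \<in> Dj j \<and> pj j w = v"
proof
  assume w: "w \<in> prod_Chi d Vt ch j v"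
  then have wV: "w \<in> PV" and wj: "w j \<in> ch j (v j)" and wk: "\<And>k. k \<noteq> j \<Longrightarrow> w k = v k"
    by (auto simp: prod_Chi_def)
  have vj: "v j \<in> Vt j" using PV_comp[OF v j] .
  have "w j \<noteq> rr j" using child_nr[OF j vj wj] .
  moreover have "pj j w = v"
    using pa_eq[OF j vj wj] wk by (auto simp: pj_def fun_eq_iff)
  ultimately show "w \<in> Dj j \<and> pj j w = v" using wV by (simp add: Dj_def)
next
  assume "w \<in> Dj j \<and> pj j w = v"
  then have wD: "w \<in> PV" "w j \<noteq> rr j" and pv: "v = w(j := pa j (w j))"
    by (auto simp: Dj_def pj_def)
  have "w j \<in> ch j (pa j (w j))" using pa_in[OF j PV_comp[OF wD(1) j] wD(2)] by blast
  then show "w \<in> prod_Chi d Vt ch j v" using wD pv by (auto simp: prod_Chi_def)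
qed

lemma Chi_img:
  assumes j: "j < d" and v: "v \<in> PV"
  shows "prod_Chi d Vt ch j v = (\<lambda>y. v(j := y)) ` ch j (v j)"
proof (intro set_eqI iffI)
  fix w assume "w \<in> prod_Chi d Vt ch j v"
  then have "w j \<in> ch j (v j)" "w = v(j := w j)" by (auto simp: prod_Chi_def fun_eq_iff)
  then show "w \<in> (\<lambda>y. v(j := y)) ` ch j (v j)" by blast
next
  fix w assume "w \<in> (\<lambda>y. v(j := y)) ` ch j (v j)"
  then obtain y where y: "y \<in> ch j (v j)" "w = v(j := y)" by blast
  have "y \<in> Vt j" using chV[OF j PV_comp[OF v j]] y by blast
  then show "w \<in> prod_Chi d Vt ch j v" using y upd_PV[OF v j] by (auto simp: prod_Chi_def)
qed

lemma Chi_card: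
  assumes j: "j < d" and v: "v \<in> PV"
  shows "card (prod_Chi d Vt ch j v) = card (ch j (v j))"
proof -
  have "inj_on (\<lambda>y. v(j := y)) (ch j (v j))" by (rule inj_onI) (simp add: fun_eq_iff, metis)
  then show ?thesis unfolding Chi_img[OF j v] by (rule card_image)
qed

lemma ch_fin: "j < d \<Longrightarrow> u \<in> Vt j \<Longrightarrow> finite (ch j u)"
  by (rule rtree.chi_fin[OF trees])

lemma ch_card1: "j < d \<Longrightarrow> u \<in> Vt j \<Longrightarrow> card (ch j u) \<ge> 1"
  by (rule rtree.chi_card[OF trees])

lemma Chi_fin: "j < d \<Longrightarrow> v \<in> PV \<Longrightarrow> finite (prod_Chi d Vt ch j v)"
  using Chi_img ch_fin PV_comp by simp

lemma Ch_eq: "j < d \<Longrightarrow> v \<in> PV \<Longrightarrow> {w \<in> Dj j. pj j w = v} = prod_Chi d Vt ch j v"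
  using Chi_char by blast

lemma lev_sum: "lev v = (\<Sum>k<d. al v k)"
  by (simp add: lev_def alpha_abs_def)

lemma al_le_lev: "k < d \<Longrightarrow> al v k \<le> lev v"
  unfolding lev_sum by (rule member_le_sum) auto

lemma dp_par: "j < d \<Longrightarrow> x \<in> Vt j \<Longrightarrow> x \<noteq> rr j \<Longrightarrow> dp j x = Suc (dp j (pa j x))"
  unfolding pa_def rr_def by (rule rtree.depth_par[OF trees])

lemma dp_root: "j < d \<Longrightarrow> dp j (rr j) = 0"
  unfolding rr_def by (rule rtree.depth_root[OF trees])

lemma dp_zero_iff: "j < d \<Longrightarrow> x \<in> Vt j \<Longrightarrow> dp j x = 0 \<longleftrightarrow> x = rr j"
  unfolding rr_def by (rule rtree.depth_zero_iff[OF trees])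

lemma al_pj:
  assumes j: "j < d" and w: "w \<in> Dj j"
  shows "al w j = Suc (al (pj j w) j)" and "k \<noteq> j \<Longrightarrow> al w k = al (pj j w) k"
    and "lev w = Suc (lev (pj j w))"
proof -
  have wV: "w \<in> PV" "w j \<noteq> rr j" using w by (auto simp: Dj_def)
  show a1: "al w j = Suc (al (pj j w) j)"
    using dp_par[OF j PV_comp[OF wV(1) j] wV(2)] by (simp add: alpha_def pj_def)
  show a2: "k \<noteq> j \<Longrightarrow> al w k = al (pj j w) k" for k by (simp add: alpha_def pj_def)
  have "(\<Sum>k<d. al w k) = al w j + (\<Sum>k\<in>{..<d} - {j}. al w k)"
    using j by (simp add: sum.remove)
  also have "\<dots> = Suc (al (pj j w) j + (\<Sum>k\<in>{..<d} - {j}. al (pj j w) k))"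
    using a1 a2 by simp
  also have "al (pj j w) j + (\<Sum>k\<in>{..<d} - {j}. al (pj j w) k) = (\<Sum>k<d. al (pj j w) k)"
    using j by (simp add: sum.remove)
  finally show "lev w = Suc (lev (pj j w))" by (simp add: lev_sum)
qed

lemma level_fin: "finite {v\<in>PV. lev v \<le> L}"
proof -
  have "{v\<in>PV. lev v \<le> L} \<subseteq> PiE {..<d} (\<lambda>j. {x\<in>Vt j. dp j x \<le> L})"
  proof
    fix v assume v: "v \<in> {v\<in>PV. lev v \<le> L}"
    have "dp j (v j) \<le> L" if "j < d" for j
      using al_le_lev[OF that, of v] v by (simp add: alpha_def)
    then show "v \<in> PiE {..<d} (\<lambda>j. {x\<in>Vt j. dp j x \<le> L})"
      using v by (auto simp: prod_V_def PiE_iff)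
  qed
  moreover have "finite (PiE {..<d} (\<lambda>j. {x\<in>Vt j. dp j x \<le> L}))"
    by (rule finite_PiE) (auto intro: rtree.level_fin[OF trees])
  ultimately show ?thesis by (rule finite_subset)
qed

definition "cc j v = real (card (ch j (v j)))"
definition "mu j v = (real (al v j) + 1) / (real (lev v) + a)"

lemma lam_eq: "j < d \<Longrightarrow> v \<in> PV \<Longrightarrow> lam j v = complex_of_real (sqrt (mu j v / cc j v))"
proof -
  assume j: "j < d" and v: "v \<in> PV"
  have "1 / sqrt (cc j v) * sqrt (mu j v) = sqrt (mu j v / cc j v)"
    by (simp add: real_sqrt_divide)
  then show ?thesis
    by (simp add: lam_def weight_Ca_def Chi_card[OF j v] mu_def cc_def lev_def)
qed

lemma cc_ge1: "j < d \<Longrightarrow> v \<in> PV \<Longrightarrow> cc j v \<ge> 1"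
  using ch_card1 PV_comp by (simp add: cc_def)

lemma mu_nonneg: "mu j v \<ge> 0"
  using apos by (simp add: mu_def)

lemma lam_sq: "j < d \<Longrightarrow> v \<in> PV \<Longrightarrow> (cmod (lam j v))\<^sup>2 = mu j v / cc j v"
proof -
  assume j: "j < d" and v: "v \<in> PV"
  have "0 \<le> mu j v / cc j v" using cc_ge1[OF j v] mu_nonneg[of j v] by simp
  then show ?thesis using lam_eq[OF j v] by simp
qed

lemma mu_le: "j < d \<Longrightarrow> mu j v \<le> 1 + 1 / a"
proof -
  assume j: "j < d"
  have al: "real (al v j) \<le> real (lev v)" using al_le_lev[OF j] by simp
  have pos: "real (lev v) + a > 0" using apos by simp
  have "real (al v j) + 1 \<le> (1 + 1 / a) * (real (lev v) + a)"
  proof -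
    have "(1 + 1 / a) * (real (lev v) + a) = real (lev v) + a + real (lev v) / a + 1"
      using apos by (simp add: field_simps)
    moreover have "real (lev v) / a \<ge> 0" using apos by simp
    ultimately show ?thesis using al apos by linarith
  qed
  then show ?thesis unfolding mu_def using pos by (simp add: divide_le_eq)
qed

lemma Kb: "j < d \<Longrightarrow> v \<in> PV \<Longrightarrow> real (card {w\<in>Dj j. pj j w = v}) * (cmod (lam j v))\<^sup>2 \<le> 1 + 1 / a"
proof -
  assume j: "j < d" and v: "v \<in> PV"
  have "real (card {w\<in>Dj j. pj j w = v}) = cc j v" using Ch_eq[OF j v] Chi_card[OF j v] by (simp add: cc_def)
  moreover have "cc j v * (mu j v / cc j v) = mu j v" using cc_ge1[OF j v] by simp
  ultimately show ?thesis using lam_sq[OF j v] mu_le[OF j, of v] by simp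
qed

lemma shiftop_j: "j < d \<Longrightarrow> shiftop PV (Dj j) (pj j) (lam j) (1 + 1 / a)"
  unfolding shiftop_def
  using Dj_sub pj_in Ch_eq Chi_fin Kb apos by (simp add: less_imp_le)

end

term shiftop.Sh
term shiftop.Sa


lemma arithL1:
  fixes n a :: real assumes n: "n \<ge> 1" and a: "a > 0"
  shows "1 / (n - 1 + a) \<le> (1 + 1 / a) / (n + a)"
proof -
  have p1: "n - 1 + a > 0" using n a by linarith
  have p2: "n + a > 0" using n a by linarith
  have "n + a \<le> (1 + 1 / a) * (n - 1 + a)"
  proof -
    have "(1 + 1 / a) * (n - 1 + a) = n - 1 + a + (n - 1) / a + 1" using a by (simp add: field_simps)
    moreover have "(n - 1) / a \<ge> 0" using n a by simp
    ultimately show ?thesis by linarith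
  qed
  then show ?thesis using p1 p2 by (simp add: field_simps)
qed

lemma arith_sq: fixes a :: real assumes "a > 0" shows "1 + 2 / a \<le> (1 + 1 / a)\<^sup>2"
proof -
  have "(1 + 1 / a)\<^sup>2 = 1 + 2 / a + 1 / a\<^sup>2" using assms by (simp add: power2_eq_square field_simps)
  moreover have "1 / a\<^sup>2 \<ge> 0" by simp
  ultimately show ?thesis by linarith
qed

lemma arithL3:
  fixes n a \<alpha> :: real assumes n: "n \<ge> 1" and a: "a > 0" and al: "0 \<le> \<alpha>" "\<alpha> \<le> n"
  shows "\<bar>(\<alpha> + 1) / (n + a) - \<alpha> / (n - 1 + a)\<bar> \<le> (1 + 1 / a)\<^sup>2 / (n + a)"
proof -
  have p1: "n - 1 + a > 0" using n a by linarith
  have p2: "n + a > 0" using n a by linarith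
  have eq: "(\<alpha> + 1) / (n + a) - \<alpha> / (n - 1 + a) = (n - 1 + a - \<alpha>) / ((n + a) * (n - 1 + a))"
    using p1 p2 by (simp add: field_simps)
  have num: "\<bar>n - 1 + a - \<alpha>\<bar> \<le> n + a + 1" using al a n by linarith
  have "\<bar>(\<alpha> + 1) / (n + a) - \<alpha> / (n - 1 + a)\<bar> = \<bar>n - 1 + a - \<alpha>\<bar> / ((n + a) * (n - 1 + a))"
    unfolding eq using p1 p2 by (simp add: abs_divide)
  also have "\<dots> \<le> (n + a + 1) / ((n + a) * (n - 1 + a))"
    using num p1 p2 by (intro divide_right_mono) auto
  also have "\<dots> = (1 + 2 / (n - 1 + a)) / (n + a)" using p1 p2 by (simp add: field_simps)
  also have "\<dots> \<le> (1 + 2 / a) / (n + a)"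
  proof -
    have "2 / (n - 1 + a) \<le> 2 / a" using p1 a n by (intro divide_left_mono) auto
    then show ?thesis using p2 by (intro divide_right_mono) auto
  qed
  also have "\<dots> \<le> (1 + 1 / a)\<^sup>2 / (n + a)" using arith_sq[OF a] p2 by (intro divide_right_mono) auto
  finally show ?thesis .
qed

lemma arithL2:
  fixes n a A B ci cj :: real
  assumes n: "n \<ge> 1" and a: "a > 0" and AB: "A \<ge> 0" "B \<ge> 0" "A + B \<le> n + 1"
    and c: "ci \<ge> 1" "cj \<ge> 1"
  shows "\<bar>sqrt (A / (n + a) / ci) * sqrt (B / (n + a) / cj) - sqrt (B / (n - 1 + a) / cj) * sqrt (A / (n - 1 + a) / ci)\<bar>
         \<le> (1 + 1 / a)\<^sup>2 / (n + a)"
proof -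
  have p1: "n - 1 + a > 0" using n a by linarith
  have p2: "n + a > 0" using n a by linarith
  define s where "s = sqrt (A * B / (ci * cj))"
  have e1: "sqrt (A / (n + a) / ci) * sqrt (B / (n + a) / cj) = s / (n + a)"
  proof -
    have "sqrt (A / (n + a) / ci) * sqrt (B / (n + a) / cj) = sqrt (A * B / (ci * cj) / (n + a)\<^sup>2)"
      by (simp add: real_sqrt_mult[symmetric] field_simps power2_eq_square)
    also have "\<dots> = sqrt (A * B / (ci * cj)) / sqrt ((n + a)\<^sup>2)" by (rule real_sqrt_divide)
    also have "\<dots> = s / (n + a)" using p2 by (simp add: s_def)
    finally show ?thesis .
  qed
  have e2: "sqrt (B / (n - 1 + a) / cj) * sqrt (A / (n - 1 + a) / ci) = s / (n - 1 + a)"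
  proof -
    have "sqrt (B / (n - 1 + a) / cj) * sqrt (A / (n - 1 + a) / ci) = sqrt (A * B / (ci * cj) / (n - 1 + a)\<^sup>2)"
      by (simp add: real_sqrt_mult[symmetric] field_simps power2_eq_square)
    also have "\<dots> = sqrt (A * B / (ci * cj)) / sqrt ((n - 1 + a)\<^sup>2)" by (rule real_sqrt_divide)
    also have "\<dots> = s / (n - 1 + a)" using p1 by (simp add: s_def)
    finally show ?thesis .
  qed
  have s0: "s \<ge> 0" using AB c by (simp add: s_def)
  have sle: "s \<le> n + 1"
  proof -
    have "A * B / (ci * cj) \<le> A * B"
    proof -
      have "ci * cj \<ge> 1" using c by (metis mult_mono' mult_1 zero_le_one)
      moreover have "A * B \<ge> 0" using AB by simp
      ultimately show ?thesis by (simp add: divide_le_eq mult_le_cancel_left1 mult.commute)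
    qed
    also have "A * B \<le> (n + 1)\<^sup>2"
    proof -
      have "A \<le> n + 1" "B \<le> n + 1" using AB by linarith+
      then have "A * B \<le> (n + 1) * (n + 1)" using AB by (intro mult_mono) auto
      then show ?thesis by (simp add: power2_eq_square)
    qed
    finally have "s \<le> sqrt ((n + 1)\<^sup>2)" unfolding s_def by (rule real_sqrt_le_mono)
    then show ?thesis using n by simp
  qed
  have "\<bar>s / (n + a) - s / (n - 1 + a)\<bar> = s / ((n + a) * (n - 1 + a))"
  proof -
    have "s / (n + a) - s / (n - 1 + a) = - (s / ((n + a) * (n - 1 + a)))"
      using p1 p2 by (simp add: field_simps)
    then show ?thesis using s0 p1 p2 by simp
  qed
  also have "\<dots> \<le> (n + 1) / ((n + a) * (n - 1 + a))"
    using sle p1 p2 by (intro divide_right_mono) auto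
  also have "\<dots> = ((n + 1) / (n - 1 + a)) / (n + a)" by (simp add: field_simps)
  also have "\<dots> \<le> (1 + 2 / a) / (n + a)"
  proof -
    have "n + 1 \<le> (1 + 2 / a) * (n - 1 + a)"
    proof -
      have "(1 + 2 / a) * (n - 1 + a) = n + 1 + a + 2 * (n - 1) / a" using a by (simp add: field_simps)
      moreover have "2 * (n - 1) / a \<ge> 0" using n a by simp
      ultimately show ?thesis using a by linarith
    qed
    then have "(n + 1) / (n - 1 + a) \<le> 1 + 2 / a" using p1 by (simp add: divide_le_eq)
    then show ?thesis using p2 by (intro divide_right_mono) auto
  qed
  also have "\<dots> \<le> (1 + 1 / a)\<^sup>2 / (n + a)" using arith_sq[OF a] p2 by (intro divide_right_mono) auto
  finally show ?thesis using e1 e2 by simp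
qed


context prodtree
begin

lemma multishift_eq:
  assumes j: "j < d"
  shows "multishift d Vt ch (weight_Ca d Vt ch a) j = shiftop.Sh (Dj j) (pj j) (lam j)"
proof (intro ext)
  fix f w
  show "multishift d Vt ch (weight_Ca d Vt ch a) j f w = shiftop.Sh (Dj j) (pj j) (lam j) f w"
  proof (cases "w \<in> Dj j")
    case True
    have set: "{v \<in> PV. w \<in> prod_Chi d Vt ch j v} = {pj j w}"
      using Chi_char[OF j] pj_in[OF j True] True by auto
    show ?thesis using True Dj_sub by (auto simp: multishift_def set shiftop.Sh_def[OF shiftop_j[OF j]] lam_def)
  next
    case False
    have set: "{v \<in> PV. w \<in> prod_Chi d Vt ch j v} = {}" using Chi_char[OF j] False by auto
    show ?thesis using False by (simp add: multishift_def set shiftop.Sh_def[OF shiftop_j[OF j]])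
  qed
qed

lemma Sh_eval: "j < d \<Longrightarrow> shiftop.Sh (Dj j) (pj j) (lam j) f w = (if w \<in> Dj j then lam j (pj j w) * f (pj j w) else 0)"
  by (simp add: shiftop.Sh_def[OF shiftop_j])

lemma Sa_eval: "i < d \<Longrightarrow> v \<in> PV \<Longrightarrow>
  shiftop.Sa PV (Dj i) (pj i) (lam i) g v = lam i v * (\<Sum>w\<in>prod_Chi d Vt ch i v. g w)"
  using lam_eq[of i v] by (simp add: shiftop.Sa_def[OF shiftop_j] shiftop.Ch_def[OF shiftop_j] Ch_eq)

lemma Sa_out: "i < d \<Longrightarrow> v \<notin> PV \<Longrightarrow> shiftop.Sa PV (Dj i) (pj i) (lam i) g v = 0"
  by (simp add: shiftop.Sa_def[OF shiftop_j])

lemma Sh_out: "j < d \<Longrightarrow> w \<notin> PV \<Longrightarrow> shiftop.Sh (Dj j) (pj j) (lam j) f w = 0"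
  using Dj_sub by (auto simp: shiftop.Sh_def[OF shiftop_j])

lemma al_two: "i < d \<Longrightarrow> j < d \<Longrightarrow> i \<noteq> j \<Longrightarrow> al v i + al v j \<le> lev v"
proof -
  assume ij: "i < d" "j < d" "i \<noteq> j"
  have "al v i + al v j = (\<Sum>k\<in>{i, j}. al v k)" using ij by simp
  also have "\<dots> \<le> (\<Sum>k<d. al v k)" by (rule sum_mono2) (use ij in auto)
  finally show ?thesis by (simp add: lev_sum)
qed

lemma card_bound_all:
  assumes "\<forall>j<d. branching_index (Vt j) (ch j) \<noteq> \<infinity>"
  shows "\<exists>K. \<forall>j<d. \<forall>u\<in>Vt j. card (ch j u) \<le> K"
proof -
  have "\<forall>j<d. \<exists>K. \<forall>u\<in>Vt j. card (ch j u) \<le> K"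
    using assms rtree.card_bound[OF trees] by blast
  then obtain Kf where Kf: "\<forall>j<d. \<forall>u\<in>Vt j. card (ch j u) \<le> Kf j" by metis
  have "\<forall>j<d. \<forall>u\<in>Vt j. card (ch j u) \<le> (\<Sum>k<d. Kf k)"
  proof (intro allI impI ballI)
    fix j u assume "j < d" "u \<in> Vt j"
    then have "card (ch j u) \<le> Kf j" using Kf by blast
    also have "Kf j \<le> (\<Sum>k<d. Kf k)" by (rule member_le_sum) (use \<open>j < d\<close> in auto)
    finally show "card (ch j u) \<le> (\<Sum>k<d. Kf k)" .
  qed
  then show ?thesis by blast
qed

lemma branch_bound_all:
  assumes "\<forall>j<d. branching_index (Vt j) (ch j) \<noteq> \<infinity>"
  shows "\<exists>N. \<forall>j<d. \<forall>u\<in>Vt j. card (ch j u) \<ge> 2 \<longrightarrow> dp j u < N"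
proof -
  have "\<forall>j<d. \<exists>N. \<forall>u\<in>Vt j. card (ch j u) \<ge> 2 \<longrightarrow> dp j u < N"
    using assms rtree.branch_bound[OF trees] by blast
  then obtain Nf where Nf: "\<forall>j<d. \<forall>u\<in>Vt j. card (ch j u) \<ge> 2 \<longrightarrow> dp j u < Nf j" by metis
  have "\<forall>j<d. \<forall>u\<in>Vt j. card (ch j u) \<ge> 2 \<longrightarrow> dp j u < (\<Sum>k<d. Nf k)"
  proof (intro allI impI ballI)
    fix j u assume "j < d" "u \<in> Vt j" "card (ch j u) \<ge> 2"
    then have "dp j u < Nf j" using Nf by blast
    also have "Nf j \<le> (\<Sum>k<d. Nf k)" by (rule member_le_sum) (use \<open>j < d\<close> in auto)
    finally show "dp j u < (\<Sum>k<d. Nf k)" .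
  qed
  then show ?thesis by blast
qed

lemma cross_struct:
  assumes i: "i < d" and j: "j < d" and ij: "i \<noteq> j" and x: "x \<in> Dj j" and y: "y \<in> ch i (x i)"
  defines "px \<equiv> pj j x"
  shows "x(i := y) \<in> Dj j" and "pj j (x(i := y)) = px(i := y)"
    and "px(i := y) \<in> prod_Chi d Vt ch i px"
    and "px(i := y) \<in> PV"
    and "cc j (px(i := y)) = cc j px" and "al (px(i := y)) j = al px j"
    and "al (px(i := y)) i = Suc (al x i)"
    and "lev (px(i := y)) = lev x"
    and "cc i px = cc i x" and "al px i = al x i"
proof -
  have xV: "x \<in> PV" and xj: "x j \<noteq> rr j" using x by (auto simp: Dj_def)
  have pxV: "px \<in> PV" using pj_in[OF j x] by (simp add: px_def)
  have pxi: "px i = x i" using ij by (simp add: px_def pj_def)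
  have yV: "y \<in> Vt i" using chV[OF i PV_comp[OF xV i]] y by blast
  show "x(i := y) \<in> Dj j" using upd_PV[OF xV i yV] xj ij by (simp add: Dj_def)
  show "pj j (x(i := y)) = px(i := y)" using ij by (auto simp: pj_def px_def fun_eq_iff)
  show c: "px(i := y) \<in> prod_Chi d Vt ch i px"
    unfolding Chi_img[OF i pxV] using y pxi by auto
  show tV: "px(i := y) \<in> PV" using upd_PV[OF pxV i yV] .
  show "cc j (px(i := y)) = cc j px" using ij by (simp add: cc_def)
  show "al (px(i := y)) j = al px j" using ij by (simp add: alpha_def)
  show "al (px(i := y)) i = Suc (al x i)"
    using rtree.depth_child[OF trees[OF i] PV_comp[OF xV i] y] by (simp add: alpha_def)
  have "lev (px(i := y)) = Suc (lev (pj i (px(i := y))))"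
    using al_pj(3)[OF i] c Chi_char[OF i pxV] by blast
  moreover have "pj i (px(i := y)) = px" using c Chi_char[OF i pxV] by blast
  moreover have "lev x = Suc (lev px)" using al_pj(3)[OF j x] by (simp add: px_def)
  ultimately show "lev (px(i := y)) = lev x" by simp
  show "cc i px = cc i x" using pxi by (simp add: cc_def)
  show "al px i = al x i" using pxi by (simp add: alpha_def)
qed

end


context prodtree
begin

abbreviation "SH j \<equiv> shiftop.Sh (Dj j) (pj j) (lam j)"
abbreviation "SA i \<equiv> shiftop.Sa PV (Dj i) (pj i) (lam i)"

definition "comm i j f = (\<lambda>x. SA i (SH j f) x - SH j (SA i f) x)"

lemma upd_inj: "inj_on (\<lambda>y. v(i := y)) A"
  by (rule inj_onI) (simp add: fun_eq_iff, metis)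

lemma lam_sq_c: "j < d \<Longrightarrow> v \<in> PV \<Longrightarrow> lam j v * lam j v = complex_of_real (mu j v / cc j v)"
proof -
  assume j: "j < d" and v: "v \<in> PV"
  have q: "mu j v / cc j v \<ge> 0" using mu_nonneg[of j v] cc_ge1[OF j v] by simp
  have "sqrt (mu j v / cc j v) * sqrt (mu j v / cc j v) = mu j v / cc j v"
    by (subst real_sqrt_mult_self) (rule abs_of_nonneg[OF q])
  then show ?thesis using lam_eq[OF j v] by (metis of_real_mult)
qed

lemma card_Chi_cc: "j < d \<Longrightarrow> v \<in> PV \<Longrightarrow> real (card (prod_Chi d Vt ch j v)) = cc j v"
  using Chi_card by (simp add: cc_def)

lemma comm_jj:
  assumes j: "j < d" and x: "x \<in> PV"
  shows "comm j j f x = complex_of_real (mu j x) * f x -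
     (if x \<in> Dj j then complex_of_real (mu j (pj j x) / cc j (pj j x)) * (\<Sum>t\<in>prod_Chi d Vt ch j (pj j x). f t) else 0)"
proof -
  have "(\<Sum>w\<in>prod_Chi d Vt ch j x. SH j f w) = (\<Sum>w\<in>prod_Chi d Vt ch j x. lam j x * f x)"
    by (rule sum.cong) (use Chi_char[OF j x] in \<open>auto simp: Sh_eval[OF j]\<close>)
  also have "\<dots> = of_nat (card (prod_Chi d Vt ch j x)) * (lam j x * f x)"
    by (rule sum_constant)
  also have "of_nat (card (prod_Chi d Vt ch j x)) = complex_of_real (cc j x)"
    using card_Chi_cc[OF j x] by (metis of_real_of_nat_eq)
  finally have s: "(\<Sum>w\<in>prod_Chi d Vt ch j x. SH j f w) = complex_of_real (cc j x) * (lam j x * f x)" .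
  have A: "SA j (SH j f) x = complex_of_real (mu j x) * f x"
  proof -
    have "SA j (SH j f) x = complex_of_real (cc j x) * (lam j x * lam j x) * f x"
      unfolding Sa_eval[OF j x] s by (simp add: mult_ac)
    also have "\<dots> = complex_of_real (cc j x * (mu j x / cc j x)) * f x"
      unfolding lam_sq_c[OF j x] by simp
    also have "cc j x * (mu j x / cc j x) = mu j x" using cc_ge1[OF j x] by simp
    finally show ?thesis .
  qed
  have B: "SH j (SA j f) x = (if x \<in> Dj j then complex_of_real (mu j (pj j x) / cc j (pj j x)) * (\<Sum>t\<in>prod_Chi d Vt ch j (pj j x). f t) else 0)"
  proof (cases "x \<in> Dj j")
    case True
    have pV: "pj j x \<in> PV" using pj_in[OF j True] .
    show ?thesis using True unfolding Sh_eval[OF j] Sa_eval[OF j pV]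
      by (simp add: mult.assoc[symmetric] lam_sq_c[OF j pV])
  qed (simp add: Sh_eval[OF j])
  show ?thesis unfolding comm_def A B ..
qed

lemma comm_ij:
  assumes i: "i < d" and j: "j < d" and ij: "i \<noteq> j" and x: "x \<in> PV"
  shows "comm i j f x = (if x \<in> Dj j then
     (\<Sum>y\<in>ch i (x i). (lam i x * lam j ((pj j x)(i := y)) - lam j (pj j x) * lam i (pj j x)) * f ((pj j x)(i := y)))
     else 0)"
proof -
  have s1: "(\<Sum>u\<in>prod_Chi d Vt ch i x. g u) = (\<Sum>y\<in>ch i (x i). g (x(i := y)))" for g :: "_ \<Rightarrow> complex"
    unfolding Chi_img[OF i x] by (rule sum.reindex[OF upd_inj, unfolded o_def])
  show ?thesis
  proof (cases "x \<in> Dj j")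
    case False
    have "x(i := y) \<notin> Dj j" for y using False ij x by (auto simp: Dj_def)
    then have "SA i (SH j f) x = 0" unfolding Sa_eval[OF i x] s1 by (simp add: Sh_eval[OF j])
    moreover have "SH j (SA i f) x = 0" using False by (simp add: Sh_eval[OF j])
    ultimately show ?thesis using False by (simp add: comm_def)
  next
    case True
    define px where "px = pj j x"
    have pV: "px \<in> PV" using pj_in[OF j True] by (simp add: px_def)
    have pxi: "px i = x i" using ij by (simp add: px_def pj_def)
    have s2: "(\<Sum>u\<in>prod_Chi d Vt ch i px. g u) = (\<Sum>y\<in>ch i (x i). g (px(i := y)))" for g :: "_ \<Rightarrow> complex"
      unfolding Chi_img[OF i pV] pxi by (rule sum.reindex[OF upd_inj, unfolded o_def])
    have a1: "SA i (SH j f) x = (\<Sum>y\<in>ch i (x i). lam i x * lam j (px(i := y)) * f (px(i := y)))"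
    proof -
      have "SA i (SH j f) x = lam i x * (\<Sum>y\<in>ch i (x i). SH j f (x(i := y)))"
        unfolding Sa_eval[OF i x] s1 ..
      also have "(\<Sum>y\<in>ch i (x i). SH j f (x(i := y))) = (\<Sum>y\<in>ch i (x i). lam j (px(i := y)) * f (px(i := y)))"
      proof (rule sum.cong)
        fix y assume y: "y \<in> ch i (x i)"
        show "SH j f (x(i := y)) = lam j (px(i := y)) * f (px(i := y))"
          using cross_struct(1,2)[OF i j ij True y] by (simp add: Sh_eval[OF j] px_def)
      qed simp
      finally show ?thesis by (simp add: sum_distrib_left mult.assoc)
    qed
    have a2: "SH j (SA i f) x = (\<Sum>y\<in>ch i (x i). lam j px * lam i px * f (px(i := y)))"
      using True unfolding Sh_eval[OF j] px_def[symmetric] Sa_eval[OF i pV] s2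
      by (simp add: sum_distrib_left mult.assoc)
    show ?thesis using True unfolding comm_def a1 a2 px_def[symmetric]
      by (simp add: sum_subtractf[symmetric] left_diff_distrib)
  qed
qed

end


context prodtree
begin

definition "Njj j x = insert x (if x \<in> Dj j then prod_Chi d Vt ch j (pj j x) else {})"
definition "Nij i j x = (if x \<in> Dj j then prod_Chi d Vt ch i (pj j x) else {})"
definition "QQ (B::nat) = (1 + 1 / a)\<^sup>2 + (real B + 1) + real B * (1 + 1 / a) + 1"

lemma QQ_ge: "QQ B \<ge> 1" "QQ B \<ge> (1 + 1 / a)\<^sup>2" "QQ B \<ge> (real B + 1) + real B * (1 + 1 / a)"
proof -
  have p: "(1 + 1 / a)\<^sup>2 \<ge> 0" "real B * (1 + 1 / a) \<ge> 0" using apos by auto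
  show "QQ B \<ge> 1" "QQ B \<ge> (1 + 1 / a)\<^sup>2" "QQ B \<ge> (real B + 1) + real B * (1 + 1 / a)"
    unfolding QQ_def using p by linarith+
qed

lemma lev_child: "j < d \<Longrightarrow> v \<in> PV \<Longrightarrow> t \<in> prod_Chi d Vt ch j v \<Longrightarrow> lev t = Suc (lev v)"
  using Chi_char al_pj(3) by metis

lemma mu_px:
  assumes j: "j < d" and x: "x \<in> Dj j"
  shows "mu j (pj j x) = real (al x j) / (real (lev x) - 1 + a)"
  using al_pj(1,3)[OF j x] by (simp add: mu_def)

lemma sum_abs_img:
  assumes i: "i < d" and v: "v \<in> PV"
  shows "(\<Sum>t\<in>prod_Chi d Vt ch i v. g t) = (\<Sum>y\<in>ch i (v i). g (v(i := y)))"
  unfolding Chi_img[OF i v] by (rule sum.reindex[OF upd_inj, unfolded o_def])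

lemma comm_jj_bound:
  assumes j: "j < d" and x: "x \<in> PV" and BI: "\<forall>u\<in>Vt j. card (ch j u) \<ge> 2 \<longrightarrow> dp j u < BI"
  shows "cmod (comm j j f x) \<le> QQ BI / (real (lev x) + a) * (\<Sum>t\<in>Njj j x. cmod (f t))"
proof (cases "x \<in> Dj j")
  case False
  have xr: "x j = rr j" using False x by (simp add: Dj_def)
  have al0: "al x j = 0" using xr dp_root[OF j] by (simp add: alpha_def)
  have pos: "real (lev x) + a > 0" using apos by simp
  have "cmod (comm j j f x) = mu j x * cmod (f x)"
    using comm_jj[OF j x, of f] False mu_nonneg[of j x] by (simp add: norm_mult)
  also have "mu j x = 1 / (real (lev x) + a)" using al0 by (simp add: mu_def)
  also have "1 / (real (lev x) + a) * cmod (f x) \<le> QQ BI / (real (lev x) + a) * cmod (f x)"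
    using QQ_ge(1)[of BI] pos by (intro mult_right_mono divide_right_mono) auto
  finally show ?thesis using False by (simp add: Njj_def)
next
  case True
  define px where "px = pj j x"
  define P where "P = prod_Chi d Vt ch j px"
  have pV: "px \<in> PV" using pj_in[OF j True] by (simp add: px_def)
  have xP: "x \<in> P" using Chi_char[OF j pV] True by (simp add: P_def px_def)
  have NP: "Njj j x = P" using True xP by (auto simp: Njj_def P_def px_def)
  have Pfin: "finite P" using Chi_fin[OF j pV] by (simp add: P_def)
  define nn where "nn = real (lev x)"
  define \<alpha> where "\<alpha> = real (al x j)"
  have nn1: "nn \<ge> 1" using al_pj(3)[OF j True] by (simp add: nn_def)
  have al_le: "\<alpha> \<le> nn" using al_le_lev[OF j] by (simp add: \<alpha>_def nn_def)
  have al0: "\<alpha> \<ge> 0" by (simp add: \<alpha>_def)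
  have pos: "nn + a > 0" "nn - 1 + a > 0" using nn1 apos by linarith+
  have mux: "mu j x = (\<alpha> + 1) / (nn + a)" by (simp add: mu_def \<alpha>_def nn_def)
  have mup: "mu j px = \<alpha> / (nn - 1 + a)" using mu_px[OF j True] by (simp add: px_def \<alpha>_def nn_def)
  have cm: "comm j j f x = complex_of_real (mu j x) * f x - complex_of_real (mu j px / cc j px) * (\<Sum>t\<in>P. f t)"
    using comm_jj[OF j x, of f] True by (simp add: px_def P_def)
  define S where "S = (\<Sum>t\<in>P. cmod (f t))"
  have fxS: "cmod (f x) \<le> S" unfolding S_def using Pfin xP by (intro member_le_sum) auto
  show ?thesis
  proof (cases "cc j px = 1")
    case True
    have "card P = 1" using True card_Chi_cc[OF j pV] by (simp add: P_def)
    then have P1: "P = {x}" using xP by (metis card_1_singletonE singletonD)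
    have "comm j j f x = complex_of_real (mu j x - mu j px) * f x"
      using cm True P1 by (simp add: algebra_simps)
    then have "cmod (comm j j f x) = \<bar>mu j x - mu j px\<bar> * cmod (f x)" by (simp only: norm_mult norm_of_real)
    also have "\<dots> \<le> (1 + 1 / a)\<^sup>2 / (nn + a) * cmod (f x)"
      unfolding mux mup using arithL3[OF nn1 apos al0 al_le] by (intro mult_right_mono) auto
    also have "\<dots> \<le> QQ BI / (nn + a) * cmod (f x)"
      using QQ_ge(2)[of BI] pos by (intro mult_right_mono divide_right_mono) auto
    finally show ?thesis using NP P1 by (simp add: nn_def)
  next
    case False
    have cc1: "cc j px \<ge> 1" using cc_ge1[OF j pV] .
    have "card (ch j (px j)) \<ge> 2"
    proof -
      have "card (ch j (px j)) \<noteq> 1" using False by (simp add: cc_def)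
      moreover have "card (ch j (px j)) \<ge> 1" using cc1 by (simp add: cc_def)
      ultimately show ?thesis by linarith
    qed
    then have "dp j (px j) < BI" using BI PV_comp[OF pV j] by blast
    then have "al px j < BI" by (simp add: alpha_def)
    then have aBI: "\<alpha> \<le> real BI" using al_pj(1)[OF j True] by (simp add: \<alpha>_def px_def)
    have m1: "mu j x \<le> (real BI + 1) / (nn + a)"
      unfolding mux using aBI pos by (intro divide_right_mono) auto
    have m2: "mu j px \<le> real BI * (1 + 1 / a) / (nn + a)"
    proof -
      have "mu j px = \<alpha> * (1 / (nn - 1 + a))" unfolding mup by simp
      also have "\<dots> \<le> real BI * ((1 + 1 / a) / (nn + a))"
        using aBI arithL1[OF nn1 apos] al0 pos by (intro mult_mono) auto
      finally show ?thesis by simp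
    qed
    have m3: "mu j px / cc j px \<le> mu j px"
    proof -
      have "mu j px \<le> cc j px * mu j px" using mult_right_mono[OF cc1 mu_nonneg[of j px]] by simp
      then show ?thesis using cc1 by (simp add: divide_le_eq mult.commute)
    qed
    have "cmod (comm j j f x) \<le> cmod (complex_of_real (mu j x) * f x) + cmod (complex_of_real (mu j px / cc j px) * (\<Sum>t\<in>P. f t))"
      unfolding cm by (rule norm_triangle_ineq4)
    also have "\<dots> = mu j x * cmod (f x) + (mu j px / cc j px) * cmod (\<Sum>t\<in>P. f t)"
      using mu_nonneg[of j x] mu_nonneg[of j px] cc1 by (simp add: norm_mult norm_divide)
    also have "\<dots> \<le> mu j x * S + mu j px * S"
    proof (intro add_mono mult_mono)
      show "cmod (\<Sum>t\<in>P. f t) \<le> S" unfolding S_def by (rule norm_sum)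
    qed (use fxS m3 mu_nonneg[of j x] mu_nonneg[of j px] cc1 S_def in \<open>auto intro: sum_nonneg\<close>)
    also have "\<dots> = (mu j x + mu j px) * S" by (simp add: algebra_simps)
    also have "\<dots> \<le> ((real BI + 1) + real BI * (1 + 1 / a)) / (nn + a) * S"
      using m1 m2 by (intro mult_right_mono) (auto simp: S_def add_divide_distrib intro: sum_nonneg)
    also have "\<dots> \<le> QQ BI / (nn + a) * S"
      using QQ_ge(3)[of BI] pos by (intro mult_right_mono divide_right_mono) (auto simp: S_def intro: sum_nonneg)
    finally show ?thesis using NP by (simp add: S_def nn_def)
  qed
qed

lemma comm_ij_bound:
  assumes i: "i < d" and j: "j < d" and ij: "i \<noteq> j" and x: "x \<in> PV"
  shows "cmod (comm i j f x) \<le> QQ BI / (real (lev x) + a) * (\<Sum>t\<in>Nij i j x. cmod (f t))"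
proof (cases "x \<in> Dj j")
  case False
  then show ?thesis using comm_ij[OF i j ij x, of f] by (simp add: Nij_def)
next
  case True
  define px where "px = pj j x"
  have pV: "px \<in> PV" using pj_in[OF j True] by (simp add: px_def)
  define nn where "nn = real (lev x)"
  have nn1: "nn \<ge> 1" using al_pj(3)[OF j True] by (simp add: nn_def)
  have pos: "nn + a > 0" using nn1 apos by linarith
  define \<delta> where "\<delta> = (1 + 1 / a)\<^sup>2 / (nn + a)"
  define A where "A = real (al x i) + 1"
  define B where "B = real (al x j)"
  have AB: "A \<ge> 0" "B \<ge> 0" "A + B \<le> nn + 1"
    using al_two[OF i j ij, of x] by (auto simp: A_def B_def nn_def)
  have kap: "cmod (lam i x * lam j (px(i := y)) - lam j px * lam i px) \<le> \<delta>" if y: "y \<in> ch i (x i)" for y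
  proof -
    define t where "t = px(i := y)"
    note cs = cross_struct[OF i j ij True y, folded px_def, folded t_def]
    have tV: "t \<in> PV" using cs(4) .
    have e1: "mu i x = A / (nn + a)" by (simp add: mu_def A_def nn_def)
    have e2: "mu j t = B / (nn + a)"
      using cs(6,8) al_pj(1)[OF j True] by (simp add: mu_def B_def nn_def px_def)
    have e3: "mu j px = B / (nn - 1 + a)" using mu_px[OF j True] by (simp add: px_def B_def nn_def)
    have e4: "mu i px = A / (nn - 1 + a)"
      using cs(10) al_pj(3)[OF j True] by (simp add: mu_def A_def nn_def px_def)
    have c1: "cc j t = cc j px" using cs(5) .
    have c2: "cc i px = cc i x" using cs(9) .
    have "lam i x * lam j t - lam j px * lam i px = complex_of_real
       (sqrt (A / (nn + a) / cc i x) * sqrt (B / (nn + a) / cc j px) - sqrt (B / (nn - 1 + a) / cc j px) * sqrt (A / (nn - 1 + a) / cc i x))"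
      using lam_eq[OF i x] lam_eq[OF j tV] lam_eq[OF j pV] lam_eq[OF i pV] e1 e2 e3 e4 c1 c2 by simp
    then have "cmod (lam i x * lam j t - lam j px * lam i px) =
       \<bar>sqrt (A / (nn + a) / cc i x) * sqrt (B / (nn + a) / cc j px) - sqrt (B / (nn - 1 + a) / cc j px) * sqrt (A / (nn - 1 + a) / cc i x)\<bar>"
      by (simp only: norm_of_real)
    also have "\<dots> \<le> \<delta>" unfolding \<delta>_def
      by (rule arithL2[OF nn1 apos AB cc_ge1[OF i x] cc_ge1[OF j pV]])
    finally show ?thesis by (simp add: t_def)
  qed
  have "cmod (comm i j f x) = cmod (\<Sum>y\<in>ch i (x i). (lam i x * lam j (px(i := y)) - lam j px * lam i px) * f (px(i := y)))"
    using comm_ij[OF i j ij x, of f] True by (simp add: px_def)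
  also have "\<dots> \<le> (\<Sum>y\<in>ch i (x i). cmod ((lam i x * lam j (px(i := y)) - lam j px * lam i px) * f (px(i := y))))"
    by (rule norm_sum)
  also have "\<dots> \<le> (\<Sum>y\<in>ch i (x i). \<delta> * cmod (f (px(i := y))))"
    by (rule sum_mono) (use kap in \<open>auto simp: norm_mult intro: mult_right_mono\<close>)
  also have "\<dots> = \<delta> * (\<Sum>t\<in>prod_Chi d Vt ch i px. cmod (f t))"
    using sum_abs_img[OF i pV, of "\<lambda>t. cmod (f t)"] cross_struct(10)[OF i j ij True]
    by (simp add: sum_distrib_left px_def pj_def ij)
  also have "\<dots> \<le> QQ BI / (nn + a) * (\<Sum>t\<in>prod_Chi d Vt ch i px. cmod (f t))"
    unfolding \<delta>_def using QQ_ge(2)[of BI] pos by (intro mult_right_mono divide_right_mono) (auto intro: sum_nonneg)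
  finally show ?thesis using True by (simp add: Nij_def nn_def px_def)
qed

end


context prodtree
begin

lemma delta_lim: "(\<lambda>n. Q / (real n + a)) \<longlonglongrightarrow> 0"
proof -
  have "filterlim (\<lambda>n. a + real n) at_top sequentially"
    by (rule filterlim_tendsto_add_at_top[OF tendsto_const filterlim_real_sequentially])
  then have "filterlim (\<lambda>n. real n + a) at_infinity sequentially"
    by (simp add: add.commute filterlim_at_top_imp_at_infinity)
  then show ?thesis by (rule tendsto_divide_0[OF tendsto_const])
qed

lemma comm_compact:
  assumes br: "\<forall>j<d. branching_index (Vt j) (ch j) \<noteq> \<infinity>" and i: "i < d" and j: "j < d"
  shows "compact_operator_ell2 PV (comm i j)"
proof -
  obtain K where K: "\<forall>j<d. \<forall>u\<in>Vt j. card (ch j u) \<le> K" using card_bound_all[OF br] by blast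
  obtain BI where BI: "\<forall>j<d. \<forall>u\<in>Vt j. card (ch j u) \<ge> 2 \<longrightarrow> dp j u < BI"
    using branch_bound_all[OF br] by blast
  have cardChi: "card (prod_Chi d Vt ch k v) \<le> K" if "k < d" "v \<in> PV" for k v
    using Chi_card[OF that] K PV_comp[OF that(2) that(1)] that(1) by simp
  have ChiV: "prod_Chi d Vt ch k v \<subseteq> PV" for k v by (auto simp: prod_Chi_def)
  interpret Si: shiftop PV "Dj i" "pj i" "lam i" "1 + 1 / a" by (rule shiftop_j[OF i])
  interpret Sj: shiftop PV "Dj j" "pj j" "lam j" "1 + 1 / a" by (rule shiftop_j[OF j])
  have lin: "linear_op PV (comm i j)"
    unfolding comm_def by (rule lin_commutator[OF Si.Sa_lin Sj.Sh_lin])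
  define N where "N = (if i = j then Njj j else Nij i j)"
  define \<delta> where "\<delta> n = QQ BI / (real n + a)" for n
  have Nfin: "finite (N x) \<and> N x \<subseteq> PV \<and> card (N x) \<le> K + 1" if x: "x \<in> PV" for x
  proof (cases "x \<in> Dj j")
    case True
    have pV: "pj j x \<in> PV" using pj_in[OF j True] .
    show ?thesis
    proof (cases "i = j")
      case True
      have "card (insert x (prod_Chi d Vt ch j (pj j x))) \<le> card (prod_Chi d Vt ch j (pj j x)) + 1"
        using Chi_fin[OF j pV] by (simp add: card_insert_if)
      then show ?thesis using \<open>x \<in> Dj j\<close> True Chi_fin[OF j pV] ChiV x cardChi[OF j pV]
        by (auto simp: N_def Njj_def)
    next
      case False
      then show ?thesis using \<open>x \<in> Dj j\<close> Chi_fin[OF i pV] ChiV cardChi[OF i pV]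
        by (auto simp: N_def Nij_def)
    qed
  next
    case False
    then show ?thesis using x by (auto simp: N_def Njj_def Nij_def)
  qed
  have Nlev: "lev t = lev x" if x: "x \<in> PV" and t: "t \<in> N x" for x t
  proof (cases "t = x")
    case True then show ?thesis by simp
  next
    case False
    then have xD: "x \<in> Dj j" and tC: "t \<in> prod_Chi d Vt ch (if i = j then j else i) (pj j x)"
      using t by (auto simp: N_def Njj_def Nij_def split: if_splits)
    have pV: "pj j x \<in> PV" using pj_in[OF j xD] .
    have "lev t = Suc (lev (pj j x))"
      using lev_child[OF _ pV tC] i j by (cases "i = j") auto
    also have "\<dots> = lev x" using al_pj(3)[OF j xD] by simp
    finally show ?thesis .
  qed
  have mult: "finite {x\<in>PV. t \<in> N x} \<and> card {x\<in>PV. t \<in> N x} \<le> K + 1" if t: "t \<in> PV" for t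
  proof (cases "i = j")
    case True
    define R where "R = insert t (if t \<in> Dj j then prod_Chi d Vt ch j (pj j t) else {})"
    have sub: "{x\<in>PV. t \<in> N x} \<subseteq> R"
    proof
      fix x assume "x \<in> {x\<in>PV. t \<in> N x}"
      then have x: "x \<in> PV" and tN: "t \<in> N x" by auto
      show "x \<in> R"
      proof (cases "x = t")
        case False
        then have xD: "x \<in> Dj j" and tC: "t \<in> prod_Chi d Vt ch j (pj j x)"
          using tN True by (auto simp: N_def Njj_def split: if_splits)
        have pV: "pj j x \<in> PV" using pj_in[OF j xD] .
        have tD: "t \<in> Dj j" "pj j t = pj j x" using Chi_char[OF j pV] tC by auto
        have "x \<in> prod_Chi d Vt ch j (pj j t)" using Chi_char[OF j pj_in[OF j tD(1)]] xD tD(2) by auto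
        then show ?thesis using tD by (simp add: R_def)
      qed (simp add: R_def)
    qed
    have Rf: "finite R" and Rc: "card R \<le> K + 1"
    proof -
      show "finite R" unfolding R_def using Chi_fin[OF j pj_in[OF j]] by auto
      show "card R \<le> K + 1"
      proof (cases "t \<in> Dj j")
        case True
        have "card R \<le> card (prod_Chi d Vt ch j (pj j t)) + 1"
          unfolding R_def using True Chi_fin[OF j pj_in[OF j True]] by (simp add: card_insert_if)
        then show ?thesis using cardChi[OF j pj_in[OF j True]] by linarith
      qed (simp add: R_def)
    qed
    show ?thesis using finite_subset[OF sub Rf] card_mono[OF Rf sub] Rc by linarith
  next
    case False
    define R where "R = (if t \<in> Dj i then prod_Chi d Vt ch j (pj i t) else {})"
    have sub: "{x\<in>PV. t \<in> N x} \<subseteq> R"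
    proof
      fix x assume "x \<in> {x\<in>PV. t \<in> N x}"
      then have x: "x \<in> PV" and tN: "t \<in> N x" by auto
      have xD: "x \<in> Dj j" and tC: "t \<in> prod_Chi d Vt ch i (pj j x)"
        using tN False by (auto simp: N_def Nij_def split: if_splits)
      have pV: "pj j x \<in> PV" using pj_in[OF j xD] .
      have tD: "t \<in> Dj i" "pj i t = pj j x" using Chi_char[OF i pV] tC by auto
      have "x \<in> prod_Chi d Vt ch j (pj i t)" using Chi_char[OF j pj_in[OF i tD(1)]] xD tD(2) by auto
      then show "x \<in> R" using tD by (simp add: R_def)
    qed
    have Rf: "finite R" unfolding R_def using Chi_fin[OF j pj_in[OF i]] by auto
    have Rc: "card R \<le> K + 1"
    proof (cases "t \<in> Dj i")
      case True
      then show ?thesis using cardChi[OF j pj_in[OF i True]] by (simp add: R_def)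
    qed (simp add: R_def)
    show ?thesis using finite_subset[OF sub Rf] card_mono[OF Rf sub] Rc by linarith
  qed
  have pw: "cmod (comm i j f x) \<le> \<delta> (lev x) * (\<Sum>t\<in>N x. cmod (f t))" if x: "x \<in> PV" for f x
  proof (cases "i = j")
    case True
    have BIj: "\<forall>u\<in>Vt j. card (ch j u) \<ge> 2 \<longrightarrow> dp j u < BI" using BI j by blast
    show ?thesis using comm_jj_bound[OF j x BIj, of f] True by (simp add: \<delta>_def N_def)
  next
    case False
    show ?thesis using comm_ij_bound[OF i j False x, of f BI] False by (simp add: \<delta>_def N_def)
  qed
  have d0: "\<delta> n \<ge> 0" for n
  proof -
    have "QQ BI \<ge> 0" using QQ_ge(1)[of BI] by linarith
    then show ?thesis using apos by (simp add: \<delta>_def)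
  qed
  have dlim: "\<delta> \<longlonglongrightarrow> 0" unfolding \<delta>_def by (rule delta_lim)
  have Tout: "comm i j f x = 0" if "x \<notin> PV" for f x
    using that by (simp add: comm_def Sa_out[OF i] Sh_out[OF j])
  show ?thesis
  proof (rule compact_crit[OF lin, where lev = lev])
    show "\<And>L. finite {x\<in>PV. lev x \<le> L}" by (rule level_fin)
    fix \<epsilon> :: real assume e: "\<epsilon> > 0"
    show "\<exists>L. \<forall>f\<in>ell2 PV. (\<forall>x\<in>PV. lev x \<le> L \<longrightarrow> f x = 0) \<longrightarrow> ell2_norm PV (comm i j f) \<le> \<epsilon> * ell2_norm PV f"
      by (rule tail_pointwise[where N=N and \<delta>=\<delta> and lev=lev, OF Tout Nfin Nlev mult pw d0 dlim e])
  qed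
qed

lemma main_loc:
  assumes br: "\<forall>j<d. branching_index (Vt j) (ch j) \<noteq> \<infinity>"
  shows "(\<forall>j<d. bounded_op (prod_V d Vt) (multishift d Vt ch (weight_Ca d Vt ch a) j)) \<and>
         (\<forall>i<d. \<forall>j<d. \<exists>Si_adj.
            is_adjoint (prod_V d Vt) (multishift d Vt ch (weight_Ca d Vt ch a) i) Si_adj \<and>
            compact_operator_ell2 (prod_V d Vt)
              (\<lambda>f x. Si_adj (multishift d Vt ch (weight_Ca d Vt ch a) j f) x
                     - multishift d Vt ch (weight_Ca d Vt ch a) j (Si_adj f) x))"
proof (intro conjI allI impI)
  fix j assume j: "j < d"
  show "bounded_op PV (multishift d Vt ch (weight_Ca d Vt ch a) j)"
    unfolding multishift_eq[OF j] by (rule shiftop.Sh_bounded[OF shiftop_j[OF j]])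
next
  fix i j assume i: "i < d" and j: "j < d"
  show "\<exists>Si_adj. is_adjoint PV (multishift d Vt ch (weight_Ca d Vt ch a) i) Si_adj \<and>
            compact_operator_ell2 PV
              (\<lambda>f x. Si_adj (multishift d Vt ch (weight_Ca d Vt ch a) j f) x
                     - multishift d Vt ch (weight_Ca d Vt ch a) j (Si_adj f) x)"
  proof (intro exI conjI)
    show "is_adjoint PV (multishift d Vt ch (weight_Ca d Vt ch a) i) (SA i)"
      unfolding multishift_eq[OF i] by (rule shiftop.is_adj[OF shiftop_j[OF i]])
    show "compact_operator_ell2 PV (\<lambda>f x. SA i (multishift d Vt ch (weight_Ca d Vt ch a) j f) x
                     - multishift d Vt ch (weight_Ca d Vt ch a) j (SA i f) x)"
      using comm_compact[OF br i j] unfolding multishift_eq[OF j] comm_def .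
  qed
qed

end

theorem mainTheorem19:
  fixes d :: nat and Vt :: "nat \<Rightarrow> 'a set" and ch :: "nat \<Rightarrow> 'a \<Rightarrow> 'a set" and a :: real
  assumes "d \<ge> 1"
    and "\<forall>j<d. rooted_directed_tree (Vt j) (ch j)"
    and "\<forall>j<d. locally_finite_tree (Vt j) (ch j)"
    and "\<forall>j<d. leafless_tree (Vt j) (ch j)"
    and "a > 0"
    and "\<forall>j<d. branching_index (Vt j) (ch j) \<noteq> \<infinity>"
  shows "(\<forall>j<d. bounded_op (prod_V d Vt) (multishift d Vt ch (weight_Ca d Vt ch a) j)) \<and>
         (\<forall>i<d. \<forall>j<d. \<exists>Si_adj.
            is_adjoint (prod_V d Vt) (multishift d Vt ch (weight_Ca d Vt ch a) i) Si_adj \<and>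
            compact_operator_ell2 (prod_V d Vt)
              (\<lambda>f x. Si_adj (multishift d Vt ch (weight_Ca d Vt ch a) j f) x
                     - multishift d Vt ch (weight_Ca d Vt ch a) j (Si_adj f) x))"
proof -
  have "prodtree d Vt ch a"
    unfolding prodtree_def using assms(2,3,4,5) by (simp add: rtree_def)
  then interpret prodtree d Vt ch a .
  show ?thesis by (rule main_loc[OF assms(6)])
qed


end
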